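(* In the setting of a Laplacian consistent coarsening of a connected weighted graph with combinatorial Laplacian $L$, fix a level $\ell$ with contraction family $\mathcal P_\ell=\{\mathcal V_{\ell-1}^{(1)},\dots,\mathcal V_{\ell-1}^{(N_\ell)}\}$ and let $\sigma_\ell=\|S_{\ell-1}\Pi_\ell^\perp A_{\ell-1}\|_2$ (with $A_{\ell-1}$, $S_{\ell-1}$, $\Pi_\ell^\perp$ as defined below). Then $$\sigma_\ell^2\le\sum_{\mathcal C\in\mathcal P_\ell}\|\Pi_{\mathcal C}^\perp A_{\ell-1}\|_{L_{\mathcal C}}^2,$$ where $\|M\|_{L_{\mathcal C}}:=\|L_{\mathcal C}^{1/2}M\|_2$ (spectral norm).
   Context: Laplacian consistent coarsening: $G_0=G$, $L_0=L$; at each level $\ell$ a surjective map $\varphi_\ell:\mathcal V_{\ell-1}\to\mathcal V_\ell=\{v'_1,\dots,v'_{N_\ell}\}$ defines contraction sets $\mathcal V_{\ell-1}^{(r)}=\varphi_\ell^{-1}(v'_r)$, each inducing a connected subgraph of $G_{\ell-1}$; $P_\ell(r,i)=1/|\mathcal V_{\ell-1}^{(r)}|$ if $v_i\in\mathcal V_{\ell-1}^{(r)}$, else $0$; $P_\ell^+(i,r)=1$ if $v_i\in\mathcal V_{\ell-1}^{(r)}$, else $0$; $L_\ell=(P_\ell^+)^\top L_{\ell-1}P_\ell^+$, the Laplacian of $G_\ell$ with weight matrix $W_\ell$. $\Pi_\ell^\perp=I-P_\ell^+P_\ell$ and $L_{\ell-1}=S_{\ell-1}^\top S_{\ell-1}$.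 Given a $k$-dimensional subspace $\mathbf R\subseteq\mathbb R^N$ with orthonormal basis $V$: $A_0=B_0=VV^\top L^{+1/2}$ and, for $\ell\ge2$, $B_{\ell-1}=P_{\ell-1}B_{\ell-2}$, $A_{\ell-1}=B_{\ell-1}(B_{\ell-1}^\top L_{\ell-1}B_{\ell-1})^{+1/2}$ ($M^{+1/2}$ is the pseudoinverse of the PSD square root). For a vertex set $\mathcal C\subseteq\mathcal V_{\ell-1}$: $\Pi_{\mathcal C}^\perp$ is the $N_{\ell-1}\times N_{\ell-1}$ matrix with $[\Pi_{\mathcal C}^\perp x](i)=x(i)-\frac{1}{|\mathcal C|}\sum_{v_j\in\mathcal C}x(j)$ if $v_i\in\mathcal C$ and $0$ otherwise; $L_{\mathcal C}$ is the $N_{\ell-1}\times N_{\ell-1}$ combinatorial Laplacian with weights $W_{\mathcal C}(i,j)=W_{\ell-1}(i,j)$ if $v_i,v_j\in\mathcal C$, $W_{\mathcal C}(i,j)=2W_{\ell-1}(i,j)$ if exactly one of $v_i,v_j$ is in $\mathcal C$, and $0$ otherwise. *)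

theory Defs
  imports "Jordan_Normal_Form.Matrix"
begin

definition symmetric_mat :: "real mat \<Rightarrow> bool" where
  "symmetric_mat M \<longleftrightarrow> M\<^sup>T = M"

definition psd_mat :: "real mat \<Rightarrow> bool" where
  "psd_mat M \<longleftrightarrow> square_mat M \<and> symmetric_mat M \<and>
     (\<forall>x \<in> carrier_vec (dim_col M). 0 \<le> x \<bullet> (M *\<^sub>v x))"

definition psd_sqrt :: "real mat \<Rightarrow> real mat" where
  "psd_sqrt M = (THE R. R \<in> carrier_mat (dim_row M) (dim_row M) \<and> psd_mat R \<and> R * R = M)"

definition pinv :: "real mat \<Rightarrow> real mat" where
  "pinv M = (THE X. X \<in> carrier_mat (dim_col M) (dim_row M) \<and>
     M * X * M = M \<and> X * M * X = X \<and> (M * X)\<^sup>T = M * X \<and> (X * M)\<^sup>T = X * M)"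

definition pinv_sqrt :: "real mat \<Rightarrow> real mat" where
  "pinv_sqrt M = pinv (psd_sqrt M)"

definition vnorm :: "real vec \<Rightarrow> real" where
  "vnorm x = sqrt (x \<bullet> x)"

definition spec_norm :: "real mat \<Rightarrow> real" where
  "spec_norm M = Sup {vnorm (M *\<^sub>v x) | x. x \<in> carrier_vec (dim_col M) \<and> vnorm x \<le> 1}"

definition L_norm :: "real mat \<Rightarrow> real mat \<Rightarrow> real" where
  "L_norm L M = spec_norm (psd_sqrt L * M)"

definition weight_matrix :: "nat \<Rightarrow> real mat \<Rightarrow> bool" where
  "weight_matrix n W \<longleftrightarrow> W \<in> carrier_mat n n \<and> symmetric_mat W \<and>
     (\<forall>i<n. \<forall>j<n. 0 \<le> W $$ (i,j)) \<and> (\<forall>i<n. W $$ (i,i) = 0)"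

definition laplacian :: "real mat \<Rightarrow> real mat" where
  "laplacian W = mat (dim_row W) (dim_row W)
     (\<lambda>(i,j). if i = j then (\<Sum>k\<in>{..<dim_row W} - {i}. W $$ (i,k)) else - W $$ (i,j))"

definition weights_of :: "real mat \<Rightarrow> real mat" where
  "weights_of L = mat (dim_row L) (dim_row L) (\<lambda>(i,j). if i = j then 0 else - L $$ (i,j))"

definition edges_in :: "real mat \<Rightarrow> nat set \<Rightarrow> (nat \<times> nat) set" where
  "edges_in W C = {(i,j). i \<in> C \<and> j \<in> C \<and> 0 < W $$ (i,j)}"

definition induces_connected :: "real mat \<Rightarrow> nat set \<Rightarrow> bool" where
  "induces_connected W C \<longleftrightarrow> C \<noteq> {} \<and> (\<forall>i\<in>C. \<forall>j\<in>C. (i,j) \<in> (edges_in W C)\<^sup>*)"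

text \<open>N l = number of vertices at level l; phi l maps vertices of level l-1 to level l (l \<ge> 1).\<close>

definition contraction_set :: "(nat \<Rightarrow> nat) \<Rightarrow> (nat \<Rightarrow> nat \<Rightarrow> nat) \<Rightarrow> nat \<Rightarrow> nat \<Rightarrow> nat set" where
  "contraction_set N \<phi> l r = {i. i < N (l - 1) \<and> \<phi> l i = r}"

definition Pmat :: "(nat \<Rightarrow> nat) \<Rightarrow> (nat \<Rightarrow> nat \<Rightarrow> nat) \<Rightarrow> nat \<Rightarrow> real mat" where
  "Pmat N \<phi> l = mat (N l) (N (l - 1))
     (\<lambda>(r,i). if \<phi> l i = r then 1 / real (card (contraction_set N \<phi> l r)) else 0)"

definition Pplus :: "(nat \<Rightarrow> nat) \<Rightarrow> (nat \<Rightarrow> nat \<Rightarrow> nat) \<Rightarrow> nat \<Rightarrow> real mat" where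
  "Pplus N \<phi> l = mat (N (l - 1)) (N l) (\<lambda>(i,r). if \<phi> l i = r then 1 else 0)"

fun Llev :: "real mat \<Rightarrow> (nat \<Rightarrow> nat) \<Rightarrow> (nat \<Rightarrow> nat \<Rightarrow> nat) \<Rightarrow> nat \<Rightarrow> real mat" where
  "Llev L N \<phi> 0 = L"
| "Llev L N \<phi> (Suc l) = (Pplus N \<phi> (Suc l))\<^sup>T * Llev L N \<phi> l * Pplus N \<phi> (Suc l)"

definition Pi_perp :: "(nat \<Rightarrow> nat) \<Rightarrow> (nat \<Rightarrow> nat \<Rightarrow> nat) \<Rightarrow> nat \<Rightarrow> real mat" where
  "Pi_perp N \<phi> l = 1\<^sub>m (N (l - 1)) - Pplus N \<phi> l * Pmat N \<phi> l"

fun Blev :: "real mat \<Rightarrow> real mat \<Rightarrow> (nat \<Rightarrow> nat) \<Rightarrow> (nat \<Rightarrow> nat \<Rightarrow> nat) \<Rightarrow> nat \<Rightarrow> real mat" where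
  "Blev L V N \<phi> 0 = V * V\<^sup>T * pinv_sqrt L"
| "Blev L V N \<phi> (Suc l) = Pmat N \<phi> (Suc l) * Blev L V N \<phi> l"

definition Alev :: "real mat \<Rightarrow> real mat \<Rightarrow> (nat \<Rightarrow> nat) \<Rightarrow> (nat \<Rightarrow> nat \<Rightarrow> nat) \<Rightarrow> nat \<Rightarrow> real mat" where
  "Alev L V N \<phi> l = (if l = 0 then Blev L V N \<phi> 0
     else Blev L V N \<phi> l * pinv_sqrt ((Blev L V N \<phi> l)\<^sup>T * Llev L N \<phi> l * Blev L V N \<phi> l))"

definition Pi_C_perp :: "nat \<Rightarrow> nat set \<Rightarrow> real mat" where
  "Pi_C_perp n C = mat n n (\<lambda>(i,j). if i \<in> C \<and> j \<in> C
     then (if i = j then 1 else 0) - 1 / real (card C) else 0)"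

definition W_C :: "real mat \<Rightarrow> nat set \<Rightarrow> real mat" where
  "W_C W C = mat (dim_row W) (dim_row W) (\<lambda>(i,j).
     if i \<in> C \<and> j \<in> C then W $$ (i,j)
     else if i \<in> C \<or> j \<in> C then 2 * W $$ (i,j) else 0)"

definition L_C :: "real mat \<Rightarrow> nat set \<Rightarrow> real mat" where
  "L_C W C = laplacian (W_C W C)"

end

theory Submission
  imports Defs "HOL-Computational_Algebra.Formal_Power_Series"
begin

definition cf :: "nat \<Rightarrow> real" where
  "cf k = (-1)^k * ((1/2::real) gchoose k)"

lemma cf_0[simp]: "cf 0 = 1" by (simp add: cf_def)

lemma cf_rec: "cf (Suc k) = cf k * (real k - 1/2) / (real k + 1)"
proof -
  have "(1/2::real) * ((1/2) gchoose k) = real k * ((1/2) gchoose k) + real (Suc k) * ((1/2) gchoose (Suc k))"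
    by (rule gbinomial_mult_1)
  hence "((1/2::real) gchoose (Suc k)) = (1/2 - real k) * ((1/2) gchoose k) / (real k + 1)"
    by (simp add: field_simps)
  hence "cf (Suc k) = (-1) * (-1)^k * ((1/2 - real k) * ((1/2) gchoose k) / (real k + 1))"
    unfolding cf_def by simp
  thus ?thesis unfolding cf_def by (simp add: field_simps)
qed

definition pp :: "nat \<Rightarrow> real" where
  "pp n = (\<Prod>i\<in>{1..n}. 1 - 1 / (2 * real i))"

lemma pp_Suc: "pp (Suc n) = pp n * (1 - 1 / (2 * (real n + 1)))"
  unfolding pp_def by (simp add: prod.cl_ivl_Suc mult.commute)

lemma pp_nonneg: "0 \<le> pp n"
  unfolding pp_def by (rule prod_nonneg) (auto simp: field_simps)

lemma cf_pp: "(\<Sum>k\<le>n. cf k) = pp n \<and> cf (Suc n) = - pp n / (2 * (real n + 1))"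
proof (induction n)
  case 0
  then show ?case by (simp add: cf_rec pp_def)
next
  case (Suc n)
  have s: "(\<Sum>k\<le>Suc n. cf k) = pp (Suc n)"
    using Suc by (simp add: pp_Suc field_simps)
  have "cf (Suc (Suc n)) = cf (Suc n) * (real (Suc n) - 1/2) / (real (Suc n) + 1)"
    by (rule cf_rec)
  also have "\<dots> = - pp (Suc n) / (2 * (real (Suc n) + 1))"
  proof -
    have e: "cf (Suc n) = - pp n / (2 * (real n + 1))" using Suc.IH by simp
    show ?thesis unfolding e pp_Suc by (simp add: field_simps)
  qed
  finally show ?case using s by simp
qed

lemma cf_Suc_nonpos: "cf (Suc k) \<le> 0"
  using cf_pp[of k] pp_nonneg[of k] by (simp add: divide_nonneg_pos)

lemma cf_psum_nonneg: "0 \<le> (\<Sum>k<n. cf k)"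
proof (cases n)
  case 0 then show ?thesis by simp
next
  case (Suc m)
  then have "{..<n} = {..m}" by auto
  then show ?thesis using cf_pp[of m] pp_nonneg[of m] by simp
qed

lemma abs_cf: "\<bar>cf k\<bar> = (if k = 0 then 2 else 0) - cf k"
  by (cases k) (auto simp: cf_Suc_nonpos)

lemma summable_abs_cf: "summable (\<lambda>k. \<bar>cf k\<bar>)"
proof (rule summableI_nonneg_bounded[where x = 2])
  fix n
  have "(\<Sum>i<n. \<bar>cf i\<bar>) = (\<Sum>i<n. (if i = 0 then 2 else 0)) - (\<Sum>i<n. cf i)"
    by (simp add: abs_cf sum_subtractf)
  also have "(\<Sum>i<n. (if i = 0 then 2 else 0::real)) \<le> 2"
    by (cases n) (auto simp: sum.delta)
  finally show "(\<Sum>i<n. \<bar>cf i\<bar>) \<le> 2" using cf_psum_nonneg[of n] by linarith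
qed auto

lemma summable_cf: "summable cf"
  using summable_abs_cf summable_rabs_cancel by blast

lemma suminf_cf_nonneg: "0 \<le> suminf cf"
proof -
  have "(\<lambda>n. \<Sum>k<n. cf k) \<longlonglongrightarrow> suminf cf"
    using summable_cf summable_LIMSEQ by blast
  then show ?thesis
    by (rule LIMSEQ_le_const) (use cf_psum_nonneg in auto)
qed

lemma cf_cauchy: "(\<Sum>i\<le>n. cf i * cf (n - i)) = (if n = 0 then 1 else if n = 1 then -1 else 0)"
proof -
  have "(\<Sum>i\<le>n. cf i * cf (n - i)) = (-1)^n * (\<Sum>i=0..n. ((1/2::real) gchoose i) * ((1/2) gchoose (n - i)))"
    unfolding cf_def sum_distrib_left
    by (rule sum.cong) (auto simp: atMost_atLeast0 power_add[symmetric])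
  also have "\<dots> = (-1)^n * ((1::real) gchoose n)"
    using gbinomial_Vandermonde[of "1/2::real" "1/2" n] by simp
  also have "\<dots> = (if n = 0 then 1 else if n = 1 then -1 else 0)"
  proof -
    consider "n = 0" | "n = 1" | m where "n = Suc (Suc m)" by (metis One_nat_def not0_implies_Suc)
    then show ?thesis
    proof cases
      case 3
      have "((1::real) gchoose Suc (Suc m)) = 0"
        unfolding gbinomial_Suc by (auto simp: prod_zero_iff intro!: bexI[of _ 1])
      then show ?thesis using 3 by simp
    qed auto
  qed
  finally show ?thesis .
qed


lemma sp_sum: "v \<bullet> w = (\<Sum>i<dim_vec w. v $ i * w $ i)"
  unfolding scalar_prod_def by (simp add: atLeast0LessThan)

lemma mv_index: "A \<in> carrier_mat n m \<Longrightarrow> y \<in> carrier_vec m \<Longrightarrow> i < n \<Longrightarrow>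
   (A *\<^sub>v y) $ i = (\<Sum>j<m. A $$ (i,j) * y $ j)"
  by (simp add: sp_sum)

lemma sp_mat: assumes "A \<in> carrier_mat n m" "x \<in> carrier_vec n" "y \<in> carrier_vec m"
  shows "x \<bullet> (A *\<^sub>v y) = (\<Sum>i<n. \<Sum>j<m. x $ i * A $$ (i,j) * y $ j)"
  using assms by (simp add: sp_sum mv_index sum_distrib_left mult.assoc)

lemma symD: "symmetric_mat A \<Longrightarrow> A \<in> carrier_mat n n \<Longrightarrow> i < n \<Longrightarrow> j < n \<Longrightarrow> A $$ (i,j) = A $$ (j,i)"
  unfolding symmetric_mat_def by (metis carrier_matD(1) carrier_matD(2) index_transpose_mat(1))

lemma sym_swap: assumes "symmetric_mat A" "A \<in> carrier_mat n n" "x \<in> carrier_vec n" "y \<in> carrier_vec n"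
  shows "x \<bullet> (A *\<^sub>v y) = y \<bullet> (A *\<^sub>v x)"
proof -
  have "x \<bullet> (A *\<^sub>v y) = (\<Sum>i<n. \<Sum>j<n. x $ i * A $$ (i,j) * y $ j)" by (rule sp_mat[OF assms(2-4)])
  also have "\<dots> = (\<Sum>j<n. \<Sum>i<n. x $ i * A $$ (i,j) * y $ j)" by (rule sum.swap)
  also have "\<dots> = (\<Sum>j<n. \<Sum>i<n. y $ j * A $$ (j,i) * x $ i)"
  proof (intro sum.cong refl)
    fix i j assume "i \<in> {..<n}" "j \<in> {..<n}"
    hence "A $$ (i,j) = A $$ (j,i)" using symD[OF assms(1,2)] by blast
    thus "x $ i * A $$ (i,j) * y $ j = y $ j * A $$ (j,i) * x $ i" by simp
  qed
  also have "\<dots> = y \<bullet> (A *\<^sub>v x)" by (rule sp_mat[OF assms(2,4,3), symmetric])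
  finally show ?thesis .
qed

lemma psd_carrier: "psd_mat M \<Longrightarrow> M \<in> carrier_mat (dim_row M) (dim_row M)"
  unfolding psd_mat_def square_mat.simps carrier_mat_def by auto

lemma psd_nonneg: "psd_mat M \<Longrightarrow> M \<in> carrier_mat n n \<Longrightarrow> x \<in> carrier_vec n \<Longrightarrow> 0 \<le> x \<bullet> (M *\<^sub>v x)"
  unfolding psd_mat_def by auto

lemma discr: fixes a b c :: real
  assumes "\<And>t. 0 \<le> a + 2*t*b + t^2*c" "0 \<le> a" "0 \<le> c"
  shows "b^2 \<le> a * c"
proof (cases "c = 0")
  case True
  show ?thesis
  proof (rule ccontr)
    assume "\<not> ?thesis"
    hence "b \<noteq> 0" using True by auto
    have "0 \<le> a + 2 * (-(a+1)/(2*b)) * b" using assms(1)[of "-(a+1)/(2*b)"] True by simp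
    also have "\<dots> = -1" using \<open>b \<noteq> 0\<close> by (simp add: field_simps)
    finally show False by simp
  qed
next
  case False
  hence c: "c > 0" using assms by auto
  have "0 \<le> a + 2 * (-b/c) * b + (-b/c)^2 * c" by (rule assms(1))
  also have "\<dots> = a - b^2 / c" using c by (simp add: field_simps power2_eq_square)
  finally show ?thesis using c by (simp add: field_simps)
qed

lemma psd_cs: assumes M: "psd_mat M" "M \<in> carrier_mat n n" and x: "x \<in> carrier_vec n" and y: "y \<in> carrier_vec n"
  shows "(x \<bullet> (M *\<^sub>v y))^2 \<le> (x \<bullet> (M *\<^sub>v x)) * (y \<bullet> (M *\<^sub>v y))"
proof (rule discr)
  have sym: "symmetric_mat M" using M unfolding psd_mat_def by auto
  fix t :: real
  let ?z = "vec n (\<lambda>i. x $ i + t * y $ i)"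
  have z: "?z \<in> carrier_vec n" by simp
  have "0 \<le> ?z \<bullet> (M *\<^sub>v ?z)" by (rule psd_nonneg[OF M z])
  also have "?z \<bullet> (M *\<^sub>v ?z) = (\<Sum>i<n. \<Sum>j<n. (x $ i + t * y $ i) * M $$ (i,j) * (x $ j + t * y $ j))"
    using sp_mat[OF M(2) z z] by simp
  also have "\<dots> = (\<Sum>i<n. \<Sum>j<n. x $ i * M $$ (i,j) * x $ j
     + t * (x $ i * M $$ (i,j) * y $ j) + t * (y $ i * M $$ (i,j) * x $ j) + t^2 * (y $ i * M $$ (i,j) * y $ j))"
    by (intro sum.cong refl) (simp add: algebra_simps power2_eq_square)
  also have "\<dots> = (\<Sum>i<n. \<Sum>j<n. x $ i * M $$ (i,j) * x $ j)
     + t * (\<Sum>i<n. \<Sum>j<n. x $ i * M $$ (i,j) * y $ j)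
     + t * (\<Sum>i<n. \<Sum>j<n. y $ i * M $$ (i,j) * x $ j)
     + t^2 * (\<Sum>i<n. \<Sum>j<n. y $ i * M $$ (i,j) * y $ j)"
    by (simp only: sum.distrib sum_distrib_left)
  also have "\<dots> = x \<bullet> (M *\<^sub>v x) + 2 * t * (x \<bullet> (M *\<^sub>v y)) + t^2 * (y \<bullet> (M *\<^sub>v y))"
    using sp_mat[OF M(2) x x] sp_mat[OF M(2) x y] sp_mat[OF M(2) y x] sp_mat[OF M(2) y y]
      sym_swap[OF sym M(2) x y] by simp
  finally show "0 \<le> x \<bullet> (M *\<^sub>v x) + 2 * t * (x \<bullet> (M *\<^sub>v y)) + t^2 * (y \<bullet> (M *\<^sub>v y))" .
qed (use psd_nonneg[OF M] x y in auto)

lemma sp_self_nonneg: "0 \<le> (v::real vec) \<bullet> v"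
  unfolding sp_sum by (intro sum_nonneg) auto

lemma sp_self_zero: assumes "(v::real vec) \<bullet> v = 0" "v \<in> carrier_vec n" shows "v = 0\<^sub>v n"
proof -
  have "\<forall>i\<in>{..<dim_vec v}. v $ i * v $ i = 0"
    using assms(1) unfolding sp_sum by (subst sum_nonneg_eq_0_iff[symmetric]) auto
  then show ?thesis using assms(2) by (intro eq_vecI) auto
qed

lemma psd_kernel: assumes M: "psd_mat M" "M \<in> carrier_mat n n" and x: "x \<in> carrier_vec n"
  and z: "x \<bullet> (M *\<^sub>v x) = 0"
  shows "M *\<^sub>v x = 0\<^sub>v n"
proof -
  let ?y = "M *\<^sub>v x"
  have y: "?y \<in> carrier_vec n" using M x by auto
  have "(?y \<bullet> (M *\<^sub>v x))^2 \<le> (?y \<bullet> (M *\<^sub>v ?y)) * (x \<bullet> (M *\<^sub>v x))"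
    by (rule psd_cs[OF M y x])
  hence "?y \<bullet> ?y = 0" using z by simp
  thus ?thesis using sp_self_zero y by blast
qed


lemma comp_le_sp: assumes "(x::real vec) \<in> carrier_vec n" "i < n" shows "(x $ i)^2 \<le> x \<bullet> x"
proof -
  have "(x $ i)^2 = x $ i * x $ i" by (simp add: power2_eq_square)
  also have "\<dots> \<le> (\<Sum>k<n. x $ k * x $ k)" using assms(2)
    by (intro member_le_sum) auto
  finally show ?thesis using assms(1) by (simp add: sp_sum)
qed

lemma prod_le_sp: assumes "(x::real vec) \<in> carrier_vec n" "i < n" "j < n"
  shows "\<bar>x $ i * x $ j\<bar> \<le> x \<bullet> x"
proof -
  have "2 * \<bar>x $ i * x $ j\<bar> \<le> (x $ i)^2 + (x $ j)^2"
  proof -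
    have "0 \<le> (\<bar>x $ i\<bar> - \<bar>x $ j\<bar>)^2" by simp
    thus ?thesis by (simp add: power2_eq_square algebra_simps abs_mult)
  qed
  thus ?thesis using comp_le_sp[OF assms(1,2)] comp_le_sp[OF assms(1,3)] by linarith
qed

lemma sp_two: assumes "(x::real vec) \<in> carrier_vec n" "y \<in> carrier_vec n"
  shows "2 * (x \<bullet> y) \<le> x \<bullet> x + y \<bullet> y"
proof -
  have "(\<Sum>i<n. 2 * (x $ i * y $ i)) \<le> (\<Sum>i<n. x $ i * x $ i + y $ i * y $ i)"
  proof (intro sum_mono)
    fix i
    have "0 \<le> (x $ i - y $ i)^2" by simp
    thus "2 * (x $ i * y $ i) \<le> x $ i * x $ i + y $ i * y $ i" by (simp add: power2_eq_square algebra_simps)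
  qed
  thus ?thesis using assms by (simp add: sp_sum sum.distrib sum_distrib_left)
qed

lemma mv_unit: "(M::real mat) \<in> carrier_mat n m \<Longrightarrow> i < n \<Longrightarrow> j < m \<Longrightarrow> (M *\<^sub>v unit_vec m j) $ i = M $$ (i,j)"
proof -
  assume a: "M \<in> carrier_mat n m" "i < n" "j < m"
  have "(M *\<^sub>v unit_vec m j) $ i = (\<Sum>l<m. M $$ (i,l) * unit_vec m j $ l)"
    by (rule mv_index[OF a(1) _ a(2)]) simp
  also have "\<dots> = (\<Sum>l<m. if l = j then M $$ (i,j) else 0)"
    using a by (intro sum.cong refl) auto
  also have "\<dots> = M $$ (i,j)" using a by (simp add: sum.delta)
  finally show ?thesis .
qed

lemma pow_comm: "B \<in> carrier_mat n n \<Longrightarrow> B * B ^\<^sub>m k = B ^\<^sub>m k * B"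
proof (induction k)
  case 0 then show ?case by simp
next
  case (Suc k)
  have "B * B ^\<^sub>m Suc k = (B * B ^\<^sub>m k) * B"
    using Suc.prems by (simp add: assoc_mult_mat[symmetric, of B n n _ n B n])
  also have "\<dots> = B ^\<^sub>m Suc k * B" using Suc by simp
  finally show ?case .
qed

lemma pow_add: "B \<in> carrier_mat n n \<Longrightarrow> B ^\<^sub>m a * B ^\<^sub>m b = B ^\<^sub>m (a + b)"
proof (induction b)
  case 0 then show ?case by simp
next
  case (Suc b)
  have "B ^\<^sub>m a * B ^\<^sub>m Suc b = (B ^\<^sub>m a * B ^\<^sub>m b) * B"
    using Suc.prems by (simp del: assoc_mult_mat add: assoc_mult_mat[symmetric, of _ n n _ n _ n])
  also have "\<dots> = B ^\<^sub>m Suc (a + b)" using Suc by simp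
  finally show ?case by simp
qed

lemma pow_sym: assumes "symmetric_mat B" "B \<in> carrier_mat n n" shows "symmetric_mat (B ^\<^sub>m k)"
proof (induction k)
  case 0 then show ?case by (simp add: symmetric_mat_def)
next
  case (Suc k)
  have "transpose_mat (B ^\<^sub>m Suc k) = transpose_mat B * transpose_mat (B ^\<^sub>m k)"
    using assms(2) by (simp add: transpose_mult[of _ n n _ n])
  also have "\<dots> = B * B ^\<^sub>m k" using Suc assms unfolding symmetric_mat_def by simp
  also have "\<dots> = B ^\<^sub>m Suc k" using pow_comm[OF assms(2)] by simp
  finally show ?case unfolding symmetric_mat_def .
qed

context
  fixes A :: "real mat" and n :: nat
  assumes A: "A \<in> carrier_mat n n" and Apsd: "psd_mat A"
begin

definition "cc = 1 + (\<Sum>i<n. \<Sum>j<n. \<bar>A $$ (i,j)\<bar>)"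
definition "BB = 1\<^sub>m n - (1/cc) \<cdot>\<^sub>m A"

lemma cc_pos: "0 < cc"
proof -
  have "0 \<le> (\<Sum>i<n. \<Sum>j<n. \<bar>A $$ (i,j)\<bar>)" by (intro sum_nonneg) auto
  thus ?thesis unfolding cc_def by simp
qed

lemma BB: "BB \<in> carrier_mat n n" unfolding BB_def using A by auto

lemma A_sym: "symmetric_mat A" using Apsd unfolding psd_mat_def by auto

lemma BB_sym: "symmetric_mat BB"
proof -
  have "A $$ (j,i) = A $$ (i,j)" if "i < n" "j < n" for i j using symD[OF A_sym A that(2,1)] .
  thus ?thesis unfolding symmetric_mat_def BB_def using A by (intro eq_matI) auto
qed

lemma A_le: assumes x: "x \<in> carrier_vec n" shows "x \<bullet> (A *\<^sub>v x) \<le> cc * (x \<bullet> x)"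
proof -
  have "x \<bullet> (A *\<^sub>v x) = (\<Sum>i<n. \<Sum>j<n. x $ i * A $$ (i,j) * x $ j)" using sp_mat[OF A x x] .
  also have "\<dots> \<le> (\<Sum>i<n. \<Sum>j<n. \<bar>A $$ (i,j)\<bar> * (x \<bullet> x))"
  proof (intro sum_mono)
    fix i j assume "i \<in> {..<n}" "j \<in> {..<n}"
    hence "\<bar>x $ i * x $ j\<bar> \<le> x \<bullet> x" using prod_le_sp[OF x] by auto
    hence "\<bar>A $$ (i,j)\<bar> * \<bar>x $ i * x $ j\<bar> \<le> \<bar>A $$ (i,j)\<bar> * (x \<bullet> x)"
      by (intro mult_left_mono) auto
    moreover have "x $ i * A $$ (i,j) * x $ j \<le> \<bar>A $$ (i,j)\<bar> * \<bar>x $ i * x $ j\<bar>"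
      by (metis abs_ge_self abs_mult mult.commute mult.left_commute)
    ultimately show "x $ i * A $$ (i,j) * x $ j \<le> \<bar>A $$ (i,j)\<bar> * (x \<bullet> x)" by linarith
  qed
  also have "\<dots> = (cc - 1) * (x \<bullet> x)" unfolding cc_def by (simp add: sum_distrib_right)
  also have "\<dots> \<le> cc * (x \<bullet> x)" using sp_self_nonneg[of x] by (simp add: algebra_simps)
  finally show ?thesis .
qed

lemma BB_form: assumes x: "x \<in> carrier_vec n"
  shows "x \<bullet> (BB *\<^sub>v x) = x \<bullet> x - (1/cc) * (x \<bullet> (A *\<^sub>v x))"
proof -
  have "x \<bullet> (BB *\<^sub>v x) = (\<Sum>i<n. \<Sum>j<n. x $ i * BB $$ (i,j) * x $ j)" using sp_mat[OF BB x x] .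
  also have "\<dots> = (\<Sum>i<n. \<Sum>j<n. (if i = j then x $ i * x $ j else 0) - (1/cc) * (x $ i * A $$ (i,j) * x $ j))"
    using A by (intro sum.cong refl) (auto simp: BB_def algebra_simps)
  also have "\<dots> = (\<Sum>i<n. x $ i * x $ i) - (1/cc) * (\<Sum>i<n. \<Sum>j<n. x $ i * A $$ (i,j) * x $ j)"
    by (simp add: sum_subtractf sum_distrib_left)
  also have "\<dots> = x \<bullet> x - (1/cc) * (x \<bullet> (A *\<^sub>v x))"
    using sp_mat[OF A x x] x by (simp add: sp_sum)
  finally show ?thesis .
qed

lemma BB_psd: "psd_mat BB"
proof -
  have "0 \<le> x \<bullet> (BB *\<^sub>v x)" if x: "x \<in> carrier_vec n" for x
  proof -
    have "(1/cc) * (x \<bullet> (A *\<^sub>v x)) \<le> (1/cc) * (cc * (x \<bullet> x))"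
      using A_le[OF x] cc_pos by (intro mult_left_mono) auto
    thus ?thesis using BB_form[OF x] cc_pos by simp
  qed
  thus ?thesis using BB BB_sym unfolding psd_mat_def by auto
qed

lemma BB_le: assumes x: "x \<in> carrier_vec n" shows "x \<bullet> (BB *\<^sub>v x) \<le> x \<bullet> x"
  using BB_form[OF x] psd_nonneg[OF Apsd A x] cc_pos by simp

lemma BB_contr: assumes x: "x \<in> carrier_vec n" shows "(BB *\<^sub>v x) \<bullet> (BB *\<^sub>v x) \<le> x \<bullet> x"
proof -
  let ?y = "BB *\<^sub>v x"
  have y: "?y \<in> carrier_vec n" using BB x by auto
  have "(x \<bullet> (BB *\<^sub>v ?y))^2 \<le> (x \<bullet> (BB *\<^sub>v x)) * (?y \<bullet> (BB *\<^sub>v ?y))"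
    by (rule psd_cs[OF BB_psd BB x y])
  also have "\<dots> \<le> (x \<bullet> x) * (?y \<bullet> ?y)"
    using BB_le[OF x] BB_le[OF y] psd_nonneg[OF BB_psd BB x] psd_nonneg[OF BB_psd BB y]
    by (intro mult_mono) (auto simp: sp_self_nonneg)
  finally have "(?y \<bullet> ?y)^2 \<le> (x \<bullet> x) * (?y \<bullet> ?y)"
    using sym_swap[OF BB_sym BB x y] by simp
  thus ?thesis using sp_self_nonneg[of ?y]
    by (cases "?y \<bullet> ?y = 0") (auto simp: power2_eq_square sp_self_nonneg)
qed

lemma pow_contr: assumes x: "x \<in> carrier_vec n"
  shows "(BB ^\<^sub>m k *\<^sub>v x) \<bullet> (BB ^\<^sub>m k *\<^sub>v x) \<le> x \<bullet> x"
  using x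
proof (induction k arbitrary: x)
  case 0 then show ?case using BB by simp
next
  case (Suc k)
  have "BB ^\<^sub>m Suc k *\<^sub>v x = BB ^\<^sub>m k *\<^sub>v (BB *\<^sub>v x)"
    using BB Suc.prems by (simp add: assoc_mult_mat_vec[of _ n n _ n])
  moreover have "BB *\<^sub>v x \<in> carrier_vec n" using BB Suc.prems by simp
  ultimately show ?case using Suc.IH BB_contr[OF Suc.prems] by (metis order_trans)
qed

lemma pow_entry: assumes "i < n" "j < n" shows "\<bar>(BB ^\<^sub>m k) $$ (i,j)\<bar> \<le> 1"
proof -
  let ?v = "BB ^\<^sub>m k *\<^sub>v unit_vec n j"
  have P: "BB ^\<^sub>m k \<in> carrier_mat n n" using BB by simp
  have "(?v $ i)^2 \<le> ?v \<bullet> ?v" using comp_le_sp[of ?v n i] P assms by simp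
  also have "\<dots> \<le> unit_vec n j \<bullet> unit_vec n j" by (rule pow_contr) simp
  also have "\<dots> = 1" using assms by simp
  finally have "(?v $ i)^2 \<le> 1" .
  thus ?thesis using mv_unit[OF P assms] by (simp add: abs_square_le_1)
qed

lemma pow_form: assumes x: "x \<in> carrier_vec n" shows "x \<bullet> (BB ^\<^sub>m k *\<^sub>v x) \<le> x \<bullet> x"
proof -
  have "2 * (x \<bullet> (BB ^\<^sub>m k *\<^sub>v x)) \<le> x \<bullet> x + (BB ^\<^sub>m k *\<^sub>v x) \<bullet> (BB ^\<^sub>m k *\<^sub>v x)"
  proof (rule sp_two[OF x])
    show "BB ^\<^sub>m k *\<^sub>v x \<in> carrier_vec n" using BB x by (metis mult_mat_vec_carrier pow_carrier_mat)
  qed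
  thus ?thesis using pow_contr[OF x, of k] by simp
qed

definition "ss i j = (\<Sum>k. cf k * (BB ^\<^sub>m k) $$ (i,j))"

lemma summ_abs: "i < n \<Longrightarrow> j < n \<Longrightarrow> summable (\<lambda>k. norm (cf k * (BB ^\<^sub>m k) $$ (i,j)))"
proof (rule summable_comparison_test'[OF summable_abs_cf, of 0])
  fix k assume "i < n" "j < n"
  hence "\<bar>cf k\<bar> * \<bar>(BB ^\<^sub>m k) $$ (i,j)\<bar> \<le> \<bar>cf k\<bar> * 1"
    by (intro mult_left_mono pow_entry) auto
  thus "norm (norm (cf k * (BB ^\<^sub>m k) $$ (i,j))) \<le> \<bar>cf k\<bar>" by (simp add: abs_mult)
qed

lemma summ: "i < n \<Longrightarrow> j < n \<Longrightarrow> summable (\<lambda>k. cf k * (BB ^\<^sub>m k) $$ (i,j))"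
  by (rule summable_norm_cancel[OF summ_abs])

definition "RR = sqrt cc \<cdot>\<^sub>m mat n n (\<lambda>(i,j). ss i j)"

lemma RR: "RR \<in> carrier_mat n n" unfolding RR_def by (rule smult_carrier_mat[OF mat_carrier])

lemma RR_sym: "symmetric_mat RR"
proof -
  have P: "symmetric_mat (BB ^\<^sub>m k)" "BB ^\<^sub>m k \<in> carrier_mat n n" for k
    using pow_sym[OF BB_sym BB] BB by auto
  have ss: "ss i j = ss j i" if "i < n" "j < n" for i j
  proof -
    have "(\<lambda>k. cf k * (BB ^\<^sub>m k) $$ (i,j)) = (\<lambda>k. cf k * (BB ^\<^sub>m k) $$ (j,i))"
    proof
      fix k show "cf k * (BB ^\<^sub>m k) $$ (i,j) = cf k * (BB ^\<^sub>m k) $$ (j,i)"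
        using symD[OF P(1) P(2) that] by (rule arg_cong)
    qed
    thus ?thesis unfolding ss_def by (rule arg_cong)
  qed
  show ?thesis unfolding symmetric_mat_def
  proof (rule eq_matI)
    fix i j assume "i < dim_row RR" "j < dim_col RR"
    hence ij: "i < n" "j < n" using RR by auto
    show "transpose_mat RR $$ (i,j) = RR $$ (i,j)"
      using ij ss[OF ij(2,1)] unfolding RR_def by simp
  qed (auto simp: RR_def)
qed


lemma RR_entry: "i < n \<Longrightarrow> j < n \<Longrightarrow> RR $$ (i,j) = sqrt cc * ss i j"
  unfolding RR_def by simp

lemma pow_entry_mult: assumes "i < n" "j < n"
  shows "(\<Sum>m<n. (BB ^\<^sub>m a) $$ (i,m) * (BB ^\<^sub>m b) $$ (m,j)) = (BB ^\<^sub>m (a+b)) $$ (i,j)"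
proof -
  have "(BB ^\<^sub>m (a+b)) $$ (i,j) = (BB ^\<^sub>m a * BB ^\<^sub>m b) $$ (i,j)" using pow_add[OF BB] by simp
  also have "\<dots> = row (BB ^\<^sub>m a) i \<bullet> col (BB ^\<^sub>m b) j" using assms BB by simp
  also have "\<dots> = (\<Sum>m<n. (BB ^\<^sub>m a) $$ (i,m) * (BB ^\<^sub>m b) $$ (m,j))"
    using assms BB by (simp add: sp_sum)
  finally show ?thesis by simp
qed

definition "dd k = (if k = 0 then 1 else if k = 1 then -1 else (0::real))"

lemma RR_sq_entry: assumes ij: "i < n" "j < n" shows "(RR * RR) $$ (i,j) = A $$ (i,j)"
proof -
  define T where "T m k = (\<Sum>a\<le>k. (cf a * (BB ^\<^sub>m a) $$ (i,m)) * (cf (k - a) * (BB ^\<^sub>m (k - a)) $$ (m,j)))" for m k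
  have prodm: "ss i m * ss m j = (\<Sum>k. T m k)" if m: "m < n" for m
    unfolding ss_def T_def by (rule Cauchy_product[OF summ_abs[OF ij(1) m] summ_abs[OF m ij(2)]])
  have sumT: "summable (T m)" if m: "m < n" for m
    unfolding T_def by (rule summable_Cauchy_product[OF summ_abs[OF ij(1) m] summ_abs[OF m ij(2)]])
  have Tsum: "(\<Sum>m<n. T m k) = dd k * (BB ^\<^sub>m k) $$ (i,j)" for k
  proof -
    have "(\<Sum>m<n. T m k) = (\<Sum>a\<le>k. cf a * cf (k - a) * (\<Sum>m<n. (BB ^\<^sub>m a) $$ (i,m) * (BB ^\<^sub>m (k - a)) $$ (m,j)))"
      unfolding T_def by (subst sum.swap) (simp add: sum_distrib_left algebra_simps)
    also have "\<dots> = (\<Sum>a\<le>k. cf a * cf (k - a) * (BB ^\<^sub>m k) $$ (i,j))"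
      by (intro sum.cong refl) (simp add: pow_entry_mult[OF ij])
    also have "\<dots> = (\<Sum>a\<le>k. cf a * cf (k - a)) * (BB ^\<^sub>m k) $$ (i,j)"
      by (simp add: sum_distrib_right)
    also have "\<dots> = dd k * (BB ^\<^sub>m k) $$ (i,j)" unfolding cf_cauchy dd_def by simp
    finally show ?thesis .
  qed
  have "(RR * RR) $$ (i,j) = (\<Sum>m<n. RR $$ (i,m) * RR $$ (m,j))"
    using ij RR by (simp add: sp_sum)
  also have "\<dots> = cc * (\<Sum>m<n. ss i m * ss m j)"
    unfolding sum_distrib_left
  proof (intro sum.cong refl)
    fix m assume "m \<in> {..<n}"
    hence "RR $$ (i,m) * RR $$ (m,j) = (sqrt cc * sqrt cc) * (ss i m * ss m j)"
      using ij by (simp add: RR_entry algebra_simps)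
    thus "RR $$ (i,m) * RR $$ (m,j) = cc * (ss i m * ss m j)" using cc_pos by simp
  qed
  also have "(\<Sum>m<n. ss i m * ss m j) = (\<Sum>m<n. \<Sum>k. T m k)"
    by (intro sum.cong refl) (simp add: prodm)
  also have "\<dots> = (\<Sum>k. \<Sum>m<n. T m k)"
    by (rule suminf_sum[symmetric]) (simp add: sumT)
  also have "\<dots> = (\<Sum>k. dd k * (BB ^\<^sub>m k) $$ (i,j))" by (simp add: Tsum)
  also have "\<dots> = (\<Sum>k\<in>{0,1}. dd k * (BB ^\<^sub>m k) $$ (i,j))"
    by (rule suminf_finite) (auto simp: dd_def)
  also have "\<dots> = (1\<^sub>m n) $$ (i,j) - BB $$ (i,j)"
    using ij BB by (simp add: dd_def)
  also have "\<dots> = (1/cc) * A $$ (i,j)"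
    using ij A by (simp add: BB_def)
  finally show ?thesis using cc_pos by simp
qed

lemma RR_sq: "RR * RR = A"
  using RR A RR_sq_entry by (intro eq_matI) auto

lemma RR_form: assumes x: "x \<in> carrier_vec n" shows "0 \<le> x \<bullet> (RR *\<^sub>v x)"
proof -
  define q where "q k = x \<bullet> (BB ^\<^sub>m k *\<^sub>v x)" for k
  have P: "BB ^\<^sub>m k \<in> carrier_mat n n" for k using BB by simp
  have sm: "summable (\<lambda>k. x $ i * x $ j * (cf k * (BB ^\<^sub>m k) $$ (i,j)))" if "i < n" "j < n" for i j
    by (rule summable_mult[OF summ[OF that]])
  have "x \<bullet> (RR *\<^sub>v x) = (\<Sum>i<n. \<Sum>j<n. x $ i * RR $$ (i,j) * x $ j)" by (rule sp_mat[OF RR x x])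
  also have "\<dots> = sqrt cc * (\<Sum>i<n. \<Sum>j<n. (\<Sum>k. x $ i * x $ j * (cf k * (BB ^\<^sub>m k) $$ (i,j))))"
    unfolding sum_distrib_left
  proof (intro sum.cong refl)
    fix i j assume ij: "i \<in> {..<n}" "j \<in> {..<n}"
    have "(\<Sum>k. x $ i * x $ j * (cf k * (BB ^\<^sub>m k) $$ (i,j))) = x $ i * x $ j * ss i j"
      unfolding ss_def by (rule suminf_mult[OF summ]) (use ij in auto)
    thus "x $ i * RR $$ (i, j) * x $ j = sqrt cc * (\<Sum>k. x $ i * x $ j * (cf k * (BB ^\<^sub>m k) $$ (i,j)))"
      using ij by (simp add: RR_entry)
  qed
  also have "(\<Sum>i<n. \<Sum>j<n. (\<Sum>k. x $ i * x $ j * (cf k * (BB ^\<^sub>m k) $$ (i,j))))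
      = (\<Sum>i<n. (\<Sum>k. \<Sum>j<n. x $ i * x $ j * (cf k * (BB ^\<^sub>m k) $$ (i,j))))"
    by (intro sum.cong refl suminf_sum[symmetric] sm) auto
  also have "\<dots> = (\<Sum>k. \<Sum>i<n. \<Sum>j<n. x $ i * x $ j * (cf k * (BB ^\<^sub>m k) $$ (i,j)))"
    by (intro suminf_sum[symmetric] summable_sum sm) auto
  also have "\<dots> = (\<Sum>k. cf k * q k)"
  proof (intro suminf_cong)
    fix k
    have "q k = (\<Sum>i<n. \<Sum>j<n. x $ i * (BB ^\<^sub>m k) $$ (i,j) * x $ j)"
      unfolding q_def by (rule sp_mat[OF P x x])
    thus "(\<Sum>i<n. \<Sum>j<n. x $ i * x $ j * (cf k * (BB ^\<^sub>m k) $$ (i,j))) = cf k * q k"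
      by (simp add: sum_distrib_left algebra_simps)
  qed
  finally have eq: "x \<bullet> (RR *\<^sub>v x) = sqrt cc * (\<Sum>k. cf k * q k)" .
  have sq: "summable (\<lambda>k. cf k * q k)"
  proof -
    have "summable (\<lambda>k. \<Sum>i<n. \<Sum>j<n. x $ i * x $ j * (cf k * (BB ^\<^sub>m k) $$ (i,j)))"
      by (intro summable_sum sm) auto
    moreover have "(\<lambda>k. \<Sum>i<n. \<Sum>j<n. x $ i * x $ j * (cf k * (BB ^\<^sub>m k) $$ (i,j))) = (\<lambda>k. cf k * q k)"
    proof
      fix k
      have "q k = (\<Sum>i<n. \<Sum>j<n. x $ i * (BB ^\<^sub>m k) $$ (i,j) * x $ j)"
        unfolding q_def by (rule sp_mat[OF P x x])
      thus "(\<Sum>i<n. \<Sum>j<n. x $ i * x $ j * (cf k * (BB ^\<^sub>m k) $$ (i,j))) = cf k * q k"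
        by (simp add: sum_distrib_left algebra_simps)
    qed
    ultimately show ?thesis by simp
  qed
  have "(\<Sum>k. cf k * (x \<bullet> x)) \<le> (\<Sum>k. cf k * q k)"
  proof (rule suminf_le)
    fix k show "cf k * (x \<bullet> x) \<le> cf k * q k"
    proof (cases k)
      case 0 then show ?thesis using x BB by (simp add: q_def)
    next
      case (Suc k')
      have "q k \<le> x \<bullet> x" unfolding q_def by (rule pow_form[OF x])
      then show ?thesis using cf_Suc_nonpos[of k'] Suc by (simp add: mult_left_mono_neg)
    qed
  qed (use summable_mult2[OF summable_cf] sq in auto)
  moreover have "(\<Sum>k. cf k * (x \<bullet> x)) = suminf cf * (x \<bullet> x)"
    by (rule suminf_mult2[OF summable_cf, symmetric])
  moreover have "0 \<le> suminf cf * (x \<bullet> x)"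
    using suminf_cf_nonneg sp_self_nonneg[of x] by simp
  ultimately show ?thesis using eq cc_pos by simp
qed

lemma RR_psd: "psd_mat RR"
  using RR RR_sym RR_form unfolding psd_mat_def by auto

end


lemma mm_entry: "X \<in> carrier_mat n k \<Longrightarrow> Y \<in> carrier_mat k m \<Longrightarrow> i < n \<Longrightarrow> j < m \<Longrightarrow>
  (X * Y) $$ (i,j) = (\<Sum>l<k. X $$ (i,l) * Y $$ (l,j))"
  by (simp add: sp_sum)

lemma sum3_rot: "(\<Sum>a<n. \<Sum>b<n. \<Sum>c<n. f a b c) = (\<Sum>b<n. \<Sum>c<n. \<Sum>a<(n::nat). (f a b c :: real))"
proof -
  have "(\<Sum>a<n. \<Sum>b<n. \<Sum>c<n. f a b c) = (\<Sum>b<n. \<Sum>a<n. \<Sum>c<n. f a b c)" by (rule sum.swap)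
  also have "\<dots> = (\<Sum>b<n. \<Sum>c<n. \<Sum>a<n. f a b c)" by (intro sum.cong refl sum.swap)
  finally show ?thesis .
qed

lemma sqrt_unique:
  assumes R1: "R1 \<in> carrier_mat n n" "psd_mat R1" and R2: "R2 \<in> carrier_mat n n" "psd_mat R2"
    and eq: "R1 * R1 = R2 * R2"
  shows "R1 = R2"
proof -
  define D where "D a b = R1 $$ (a,b) - R2 $$ (a,b)" for a b
  define S where "S a b = R1 $$ (a,b) + R2 $$ (a,b)" for a b
  have sym1: "R1 $$ (a,b) = R1 $$ (b,a)" if "a < n" "b < n" for a b
    using symD[OF _ R1(1) that] R1(2) unfolding psd_mat_def by blast
  have sym2: "R2 $$ (a,b) = R2 $$ (b,a)" if "a < n" "b < n" for a b
    using symD[OF _ R2(1) that] R2(2) unfolding psd_mat_def by blast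
  have symD': "D a b = D b a" if "a < n" "b < n" for a b
    unfolding D_def using sym1[OF that] sym2[OF that] by simp
  have E: "(\<Sum>l<n. R1 $$ (i,l) * R1 $$ (l,j)) = (\<Sum>l<n. R2 $$ (i,l) * R2 $$ (l,j))"
    if "i < n" "j < n" for i j
    using arg_cong[OF eq, of "\<lambda>M. M $$ (i,j)"] mm_entry[OF R1(1) R1(1) that] mm_entry[OF R2(1) R2(1) that]
    by simp
  have E2: "(\<Sum>l<n. S k l * D l i) = - (\<Sum>l<n. D k l * S l i)" if "k < n" "i < n" for k i
  proof -
    have "(\<Sum>l<n. S k l * D l i) + (\<Sum>l<n. D k l * S l i)
        = 2 * (\<Sum>l<n. R1 $$ (k,l) * R1 $$ (l,i)) - 2 * (\<Sum>l<n. R2 $$ (k,l) * R2 $$ (l,i))"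
      unfolding sum.distrib[symmetric] sum_distrib_left sum_subtractf[symmetric]
      by (intro sum.cong refl) (simp add: S_def D_def algebra_simps)
    thus ?thesis using E[OF that] by simp
  qed
  define T where "T = (\<Sum>a<n. \<Sum>b<n. \<Sum>c<n. D a b * S b c * D c a)"
  have T1: "T = - (\<Sum>a<n. \<Sum>b<n. \<Sum>c<n. D a b * D b c * S c a)"
  proof -
    have "T = (\<Sum>a<n. \<Sum>b<n. D a b * (\<Sum>c<n. S b c * D c a))"
      unfolding T_def by (simp add: sum_distrib_left mult.assoc)
    also have "\<dots> = (\<Sum>a<n. \<Sum>b<n. D a b * (- (\<Sum>c<n. D b c * S c a)))"
      by (intro sum.cong refl) (simp add: E2)
    also have "\<dots> = - (\<Sum>a<n. \<Sum>b<n. \<Sum>c<n. D a b * D b c * S c a)"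
      by (simp add: sum_distrib_left sum_negf mult.assoc)
    finally show ?thesis .
  qed
  have T2: "(\<Sum>a<n. \<Sum>b<n. \<Sum>c<n. D a b * D b c * S c a) = T"
    unfolding T_def sum3_rot[where f="\<lambda>a b c. D a b * D b c * S c a" and n=n]
    by (intro sum.cong refl) (simp add: algebra_simps)
  have T0: "T = 0" using T1 T2 by simp
  define v where "v a = vec n (\<lambda>b. D b a)" for a
  have v: "v a \<in> carrier_vec n" for a unfolding v_def by simp
  have q1: "v a \<bullet> (R1 *\<^sub>v v a) = (\<Sum>b<n. \<Sum>c<n. D b a * R1 $$ (b,c) * D c a)" for a
    using sp_mat[OF R1(1) v v] unfolding v_def by simp
  have q2: "v a \<bullet> (R2 *\<^sub>v v a) = (\<Sum>b<n. \<Sum>c<n. D b a * R2 $$ (b,c) * D c a)" for a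
    using sp_mat[OF R2(1) v v] unfolding v_def by simp
  have "T = (\<Sum>a<n. v a \<bullet> (R1 *\<^sub>v v a) + v a \<bullet> (R2 *\<^sub>v v a))"
    unfolding q1 q2 T_def sum.distrib[symmetric]
    by (intro sum.cong refl) (simp add: S_def symD' algebra_simps)
  hence all: "\<forall>a\<in>{..<n}. v a \<bullet> (R1 *\<^sub>v v a) + v a \<bullet> (R2 *\<^sub>v v a) = 0"
    using T0 psd_nonneg[OF R1(2) R1(1) v] psd_nonneg[OF R2(2) R2(1) v]
    by (subst sum_nonneg_eq_0_iff[symmetric]) (auto intro: add_nonneg_nonneg)
  have z: "v a \<bullet> (R1 *\<^sub>v v a) = 0 \<and> v a \<bullet> (R2 *\<^sub>v v a) = 0" if "a < n" for a
  proof -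
    have s: "v a \<bullet> (R1 *\<^sub>v v a) + v a \<bullet> (R2 *\<^sub>v v a) = 0" using all that by blast
    show ?thesis using s psd_nonneg[OF R1(2) R1(1) v, of a] psd_nonneg[OF R2(2) R2(1) v, of a] by linarith
  qed
  have k1: "R1 *\<^sub>v v a = 0\<^sub>v n" if "a < n" for a using psd_kernel[OF R1(2) R1(1) v] z[OF that] by blast
  have k2: "R2 *\<^sub>v v a = 0\<^sub>v n" if "a < n" for a using psd_kernel[OF R2(2) R2(1) v] z[OF that] by blast
  have DD: "(\<Sum>c<n. D b c * D c a) = 0" if "a < n" "b < n" for a b
  proof -
    have "(R1 *\<^sub>v v a) $ b = (\<Sum>c<n. R1 $$ (b,c) * D c a)"
      using mv_index[OF R1(1) v that(2)] unfolding v_def by simp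
    moreover have "(R2 *\<^sub>v v a) $ b = (\<Sum>c<n. R2 $$ (b,c) * D c a)"
      using mv_index[OF R2(1) v that(2)] unfolding v_def by simp
    ultimately have "(\<Sum>c<n. R1 $$ (b,c) * D c a) - (\<Sum>c<n. R2 $$ (b,c) * D c a) = 0"
      using k1[OF that(1)] k2[OF that(1)] that by simp
    thus ?thesis unfolding sum_subtractf[symmetric] by (simp add: D_def algebra_simps)
  qed
  have D0: "D a c = 0" if "a < n" "c < n" for a c
  proof -
    have "(\<Sum>c<n. D a c * D a c) = 0"
      using DD[OF that(1) that(1)] symD'[OF that(1)] by (simp add: symD')
    hence "\<forall>c\<in>{..<n}. D a c * D a c = 0"
      by (subst sum_nonneg_eq_0_iff[symmetric]) auto
    thus ?thesis using that by auto
  qed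
  show ?thesis using R1(1) R2(1) D0 unfolding D_def by (intro eq_matI) auto
qed

lemma sqrt_exists: "A \<in> carrier_mat n n \<Longrightarrow> psd_mat A \<Longrightarrow> \<exists>R. R \<in> carrier_mat n n \<and> psd_mat R \<and> R * R = A"
  using RR RR_psd RR_sq by blast

lemma psd_sqrt: assumes "A \<in> carrier_mat n n" "psd_mat A"
  shows "psd_sqrt A \<in> carrier_mat n n" "psd_mat (psd_sqrt A)" "psd_sqrt A * psd_sqrt A = A"
proof -
  have ex: "\<exists>!R. R \<in> carrier_mat (dim_row A) (dim_row A) \<and> psd_mat R \<and> R * R = A"
    using sqrt_exists[OF assms] sqrt_unique assms(1) by auto
  have "psd_sqrt A \<in> carrier_mat (dim_row A) (dim_row A) \<and> psd_mat (psd_sqrt A) \<and> psd_sqrt A * psd_sqrt A = A"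
    unfolding psd_sqrt_def by (rule theI'[OF ex])
  thus "psd_sqrt A \<in> carrier_mat n n" "psd_mat (psd_sqrt A)" "psd_sqrt A * psd_sqrt A = A"
    using assms(1) by auto
qed


lemma vnorm_sq: "(vnorm x)^2 = x \<bullet> x"
  unfolding vnorm_def by (rule real_sqrt_pow2[OF sp_self_nonneg])

lemma vnorm_nonneg: "0 \<le> vnorm x" unfolding vnorm_def by (simp add: sp_self_nonneg)

lemma vnorm_smult: "vnorm (c \<cdot>\<^sub>v x) = \<bar>c\<bar> * vnorm x"
proof -
  have "(c \<cdot>\<^sub>v x) \<bullet> (c \<cdot>\<^sub>v x) = c^2 * (x \<bullet> x)"
    by (simp add: sp_sum sum_distrib_left algebra_simps power2_eq_square)
  thus ?thesis unfolding vnorm_def by (simp add: real_sqrt_mult)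
qed

lemma mat_bound: assumes M: "M \<in> carrier_mat m n" and x: "x \<in> carrier_vec n"
  shows "vnorm (M *\<^sub>v x) \<le> sqrt (\<Sum>i<m. (\<Sum>j<n. \<bar>M $$ (i,j)\<bar>)^2) * vnorm x"
proof -
  have xj: "\<bar>x $ j\<bar> \<le> vnorm x" if "j < n" for j
    using comp_le_sp[OF x that] unfolding vnorm_def by (simp add: real_le_rsqrt)
  have row: "((M *\<^sub>v x) $ i)^2 \<le> (\<Sum>j<n. \<bar>M $$ (i,j)\<bar>)^2 * (x \<bullet> x)" if "i < m" for i
  proof -
    have "\<bar>(M *\<^sub>v x) $ i\<bar> = \<bar>\<Sum>j<n. M $$ (i,j) * x $ j\<bar>" using mv_index[OF M x that] by simp
    also have "\<dots> \<le> (\<Sum>j<n. \<bar>M $$ (i,j) * x $ j\<bar>)" by (rule sum_abs)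
    also have "\<dots> \<le> (\<Sum>j<n. \<bar>M $$ (i,j)\<bar> * vnorm x)"
      by (intro sum_mono) (simp add: abs_mult mult_left_mono xj)
    also have "\<dots> = (\<Sum>j<n. \<bar>M $$ (i,j)\<bar>) * vnorm x" by (simp add: sum_distrib_right)
    finally have "\<bar>(M *\<^sub>v x) $ i\<bar> \<le> (\<Sum>j<n. \<bar>M $$ (i,j)\<bar>) * vnorm x" .
    hence "\<bar>(M *\<^sub>v x) $ i\<bar>^2 \<le> ((\<Sum>j<n. \<bar>M $$ (i,j)\<bar>) * vnorm x)^2"
      by (intro power_mono) auto
    thus ?thesis by (simp add: power_mult_distrib vnorm_sq)
  qed
  have "(M *\<^sub>v x) \<bullet> (M *\<^sub>v x) = (\<Sum>i<m. ((M *\<^sub>v x) $ i)^2)"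
    using M by (simp add: sp_sum power2_eq_square)
  also have "\<dots> \<le> (\<Sum>i<m. (\<Sum>j<n. \<bar>M $$ (i,j)\<bar>)^2 * (x \<bullet> x))"
    by (intro sum_mono row) auto
  also have "\<dots> = (\<Sum>i<m. (\<Sum>j<n. \<bar>M $$ (i,j)\<bar>)^2) * (x \<bullet> x)" by (simp add: sum_distrib_right)
  finally have "(vnorm (M *\<^sub>v x))^2 \<le> (sqrt (\<Sum>i<m. (\<Sum>j<n. \<bar>M $$ (i,j)\<bar>)^2) * vnorm x)^2"
    by (simp add: vnorm_sq power_mult_distrib sum_nonneg)
  thus ?thesis
    by (rule power2_le_imp_le) (simp add: vnorm_nonneg sum_nonneg)
qed

definition "spset M = {vnorm (M *\<^sub>v x) | x. x \<in> carrier_vec (dim_col M) \<and> vnorm x \<le> 1}"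

lemma spset_bdd: "bdd_above (spset M)"
proof -
  let ?K = "sqrt (\<Sum>i<dim_row M. (\<Sum>j<dim_col M. \<bar>M $$ (i,j)\<bar>)^2)"
  have "y \<le> ?K" if "y \<in> spset M" for y
  proof -
    from that obtain x where x: "y = vnorm (M *\<^sub>v x)" "x \<in> carrier_vec (dim_col M)" "vnorm x \<le> 1"
      unfolding spset_def by blast
    have "y \<le> ?K * vnorm x" unfolding x(1) by (rule mat_bound[OF _ x(2)]) simp
    also have "\<dots> \<le> ?K * 1" using x(3) by (intro mult_left_mono) (auto intro!: sum_nonneg)
    finally show ?thesis by simp
  qed
  thus ?thesis unfolding bdd_above_def by blast
qed

lemma spset_ne: "spset M \<noteq> {}"
proof -
  have "vnorm (M *\<^sub>v 0\<^sub>v (dim_col M)) \<in> spset M"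
    unfolding spset_def by (rule CollectI, rule exI[of _ "0\<^sub>v (dim_col M)"]) (simp add: vnorm_def sp_sum)
  thus ?thesis by blast
qed

lemma spec_upper: "x \<in> carrier_vec (dim_col M) \<Longrightarrow> vnorm x \<le> 1 \<Longrightarrow> vnorm (M *\<^sub>v x) \<le> spec_norm M"
  unfolding spec_norm_def spset_def[symmetric]
  by (rule cSup_upper[OF _ spset_bdd]) (auto simp: spset_def)

lemma spec_nonneg: "0 \<le> spec_norm M"
  using spec_upper[of "0\<^sub>v (dim_col M)" M] by (simp add: vnorm_def sp_sum)

lemma spec_least: assumes "\<And>x. x \<in> carrier_vec (dim_col M) \<Longrightarrow> vnorm x \<le> 1 \<Longrightarrow> vnorm (M *\<^sub>v x) \<le> K"
  shows "spec_norm M \<le> K"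
  unfolding spec_norm_def spset_def[symmetric]
  by (rule cSup_least[OF spset_ne]) (use assms in \<open>auto simp: spset_def\<close>)

lemma spec_scale: assumes M: "M \<in> carrier_mat m n" and x: "x \<in> carrier_vec n"
  shows "vnorm (M *\<^sub>v x) \<le> spec_norm M * vnorm x"
proof (cases "vnorm x = 0")
  case True
  hence "x \<bullet> x = 0" using vnorm_sq[of x] by simp
  hence "x = 0\<^sub>v n" using sp_self_zero x by blast
  hence "M *\<^sub>v x = 0\<^sub>v m" using M by auto
  thus ?thesis using True by (simp add: vnorm_def sp_sum)
next
  case False
  hence pos: "0 < vnorm x" using vnorm_nonneg[of x] by simp
  let ?y = "(1 / vnorm x) \<cdot>\<^sub>v x"
  have y: "?y \<in> carrier_vec (dim_col M)" using x M by simp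
  have ny: "vnorm ?y = 1" using pos by (simp add: vnorm_smult)
  have "vnorm (M *\<^sub>v ?y) = (1 / vnorm x) * vnorm (M *\<^sub>v x)"
    using mult_mat_vec[OF M x] pos by (simp add: vnorm_smult)
  moreover have "vnorm (M *\<^sub>v ?y) \<le> spec_norm M" using spec_upper[OF y] ny by simp
  ultimately have "vnorm (M *\<^sub>v x) = vnorm x * vnorm (M *\<^sub>v ?y)" "vnorm (M *\<^sub>v ?y) \<le> spec_norm M"
    using pos by (simp_all add: field_simps)
  thus ?thesis using pos by (simp add: mult_left_mono mult.commute)
qed


lemma lap_carrier: "laplacian V \<in> carrier_mat (dim_row V) (dim_row V)"
  unfolding laplacian_def by simp

lemma lap_entry: "i < dim_row V \<Longrightarrow> j < dim_row V \<Longrightarrow> laplacian V $$ (i,j) =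
   (if i = j then (\<Sum>k\<in>{..<dim_row V} - {i}. V $$ (i,k)) else - V $$ (i,j))"
  unfolding laplacian_def by simp

lemma lap_rowsum: assumes "i < dim_row V" shows "(\<Sum>j<dim_row V. laplacian V $$ (i,j)) = 0"
proof -
  have "(\<Sum>j<dim_row V. laplacian V $$ (i,j)) = laplacian V $$ (i,i) + (\<Sum>j\<in>{..<dim_row V} - {i}. laplacian V $$ (i,j))"
    using assms by (subst sum.remove[of _ i]) auto
  also have "(\<Sum>j\<in>{..<dim_row V} - {i}. laplacian V $$ (i,j)) = (\<Sum>j\<in>{..<dim_row V} - {i}. - V $$ (i,j))"
    using assms by (intro sum.cong refl) (auto simp: lap_entry)
  finally show ?thesis using assms by (simp add: lap_entry sum_negf)
qed

lemma lap_sym: assumes "symmetric_mat V" "V \<in> carrier_mat n n" shows "symmetric_mat (laplacian V)"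
proof -
  have "laplacian V $$ (j,i) = laplacian V $$ (i,j)" if "i < n" "j < n" for i j
  proof (cases "i = j")
    case False
    have "V $$ (j,i) = V $$ (i,j)" using symD[OF assms that(2,1)] .
    then show ?thesis using that assms(2) False by (simp add: lap_entry)
  qed simp
  thus ?thesis unfolding symmetric_mat_def using assms(2) by (intro eq_matI) (auto simp: laplacian_def)
qed

lemma zrs_form: assumes M: "M \<in> carrier_mat n n" "symmetric_mat M"
  and rs: "\<And>i. i < n \<Longrightarrow> (\<Sum>j<n. M $$ (i,j)) = 0" and z: "z \<in> carrier_vec n"
  shows "z \<bullet> (M *\<^sub>v z) = - (1/2) * (\<Sum>i<n. \<Sum>j<n. M $$ (i,j) * (z $ i - z $ j)^2)"
proof -
  have cs: "(\<Sum>i<n. M $$ (i,j)) = 0" if "j < n" for j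
  proof -
    have "(\<Sum>i<n. M $$ (i,j)) = (\<Sum>i<n. M $$ (j,i))"
      by (intro sum.cong refl) (use symD[OF M(2) M(1) that] in \<open>metis lessThan_iff symD[OF M(2) M(1)] that\<close>)
    thus ?thesis using rs[OF that] by simp
  qed
  have "(\<Sum>i<n. \<Sum>j<n. M $$ (i,j) * (z $ i - z $ j)^2)
     = (\<Sum>i<n. \<Sum>j<n. M $$ (i,j) * (z $ i)^2) + (\<Sum>i<n. \<Sum>j<n. M $$ (i,j) * (z $ j)^2)
       - 2 * (\<Sum>i<n. \<Sum>j<n. z $ i * M $$ (i,j) * z $ j)"
    unfolding sum_distrib_left sum.distrib[symmetric] sum_subtractf[symmetric]
    by (intro sum.cong refl) (simp add: power2_eq_square algebra_simps)
  also have "(\<Sum>i<n. \<Sum>j<n. M $$ (i,j) * (z $ i)^2) = 0"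
    by (simp add: sum_distrib_right[symmetric] rs)
  also have "(\<Sum>i<n. \<Sum>j<n. M $$ (i,j) * (z $ j)^2) = 0"
    by (subst sum.swap) (simp add: sum_distrib_right[symmetric] cs)
  finally show ?thesis using sp_mat[OF M(1) z z] by simp
qed

lemma lap_form: assumes V: "V \<in> carrier_mat n n" "symmetric_mat V" and z: "z \<in> carrier_vec n"
  shows "z \<bullet> (laplacian V *\<^sub>v z) = (1/2) * (\<Sum>i<n. \<Sum>j<n. (if i = j then 0 else V $$ (i,j)) * (z $ i - z $ j)^2)"
proof -
  have L: "laplacian V \<in> carrier_mat n n" using lap_carrier[of V] V by simp
  have "z \<bullet> (laplacian V *\<^sub>v z) = - (1/2) * (\<Sum>i<n. \<Sum>j<n. laplacian V $$ (i,j) * (z $ i - z $ j)^2)"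
    by (rule zrs_form[OF L lap_sym[OF V(2,1)] _ z]) (use lap_rowsum[of _ V] V in auto)
  also have "(\<Sum>i<n. \<Sum>j<n. laplacian V $$ (i,j) * (z $ i - z $ j)^2)
     = - (\<Sum>i<n. \<Sum>j<n. (if i = j then 0 else V $$ (i,j)) * (z $ i - z $ j)^2)"
    unfolding sum_negf[symmetric]
    by (intro sum.cong refl) (use V in \<open>auto simp: lap_entry\<close>)
  finally show ?thesis by simp
qed

lemma lap_psd: assumes V: "V \<in> carrier_mat n n" "symmetric_mat V"
  and nn: "\<And>i j. i < n \<Longrightarrow> j < n \<Longrightarrow> i \<noteq> j \<Longrightarrow> 0 \<le> V $$ (i,j)"
  shows "psd_mat (laplacian V)"
proof -
  have L: "laplacian V \<in> carrier_mat n n" using lap_carrier[of V] V by simp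
  have "0 \<le> z \<bullet> (laplacian V *\<^sub>v z)" if z: "z \<in> carrier_vec n" for z
    unfolding lap_form[OF V z] using nn
    by (intro mult_nonneg_nonneg sum_nonneg) auto
  thus ?thesis using L lap_sym[OF V(2,1)] unfolding psd_mat_def by auto
qed


lemma wm_entry: "weight_matrix n W \<Longrightarrow> i < n \<Longrightarrow> j < n \<Longrightarrow> 0 \<le> W $$ (i,j)"
  unfolding weight_matrix_def by auto

lemma coarse_entry:
  assumes L: "L \<in> carrier_mat n n" and f: "\<And>i. i < n \<Longrightarrow> f i < n'"
    and r: "r < n'" and s: "s < n'"
  shows "((mat n n' (\<lambda>(i,r). if f i = r then 1 else 0))\<^sup>T * L * mat n n' (\<lambda>(i,r). if f i = r then 1 else 0)) $$ (r,s)
     = (\<Sum>i<n. \<Sum>j<n. if f i = r \<and> f j = s then L $$ (i,j) else (0::real))"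
proof -
  let ?P = "mat n n' (\<lambda>(i,r). if f i = r then 1 else (0::real))"
  have P: "?P \<in> carrier_mat n n'" by simp
  have PT: "?P\<^sup>T \<in> carrier_mat n' n" by simp
  have PL: "?P\<^sup>T * L \<in> carrier_mat n' n" by (rule mult_carrier_mat[OF PT L])
  have e1: "(?P\<^sup>T * L) $$ (r,j) = (\<Sum>i<n. (if f i = r then 1 else 0) * L $$ (i,j))" if "j < n" for j
    using mm_entry[OF PT L r that] r by simp
  have "(?P\<^sup>T * L * ?P) $$ (r,s) = (\<Sum>j<n. (?P\<^sup>T * L) $$ (r,j) * ?P $$ (j,s))"
    by (rule mm_entry[OF PL P r s])
  also have "\<dots> = (\<Sum>j<n. (\<Sum>i<n. (if f i = r then 1 else 0) * L $$ (i,j)) * (if f j = s then 1 else 0))"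
    using s by (intro sum.cong refl) (simp add: e1)
  also have "\<dots> = (\<Sum>j<n. \<Sum>i<n. if f i = r \<and> f j = s then L $$ (i,j) else 0)"
    unfolding sum_distrib_right by (intro sum.cong refl) auto
  also have "\<dots> = (\<Sum>i<n. \<Sum>j<n. if f i = r \<and> f j = s then L $$ (i,j) else 0)"
    by (rule sum.swap)
  finally show ?thesis .
qed

lemma Llev_props:
  assumes graph: "weight_matrix (N 0) W"
    and surj: "\<And>j. 1 \<le> j \<Longrightarrow> j \<le> l \<Longrightarrow> \<phi> j ` {..<N (j - 1)} = {..<N j}"
    and ml: "m < l"
  shows "Llev (laplacian W) N \<phi> m \<in> carrier_mat (N m) (N m)
    \<and> symmetric_mat (Llev (laplacian W) N \<phi> m)
    \<and> (\<forall>i<N m. (\<Sum>j<N m. Llev (laplacian W) N \<phi> m $$ (i,j)) = 0)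
    \<and> (\<forall>i<N m. \<forall>j<N m. i \<noteq> j \<longrightarrow> Llev (laplacian W) N \<phi> m $$ (i,j) \<le> 0)"
  using ml
proof (induction m)
  case 0
  have W: "W \<in> carrier_mat (N 0) (N 0)" "symmetric_mat W" using graph unfolding weight_matrix_def by auto
  have dW: "dim_row W = N 0" using W by simp
  show ?case
    using lap_carrier[of W] lap_sym[OF W(2,1)] lap_rowsum[of _ W] wm_entry[OF graph] dW
    by (auto simp: lap_entry)
next
  case (Suc m)
  let ?L = "Llev (laplacian W) N \<phi> m"
  let ?f = "\<phi> (Suc m)"
  have IH: "?L \<in> carrier_mat (N m) (N m)" "symmetric_mat ?L"
    "\<And>i. i < N m \<Longrightarrow> (\<Sum>j<N m. ?L $$ (i,j)) = 0"
    "\<And>i j. i < N m \<Longrightarrow> j < N m \<Longrightarrow> i \<noteq> j \<Longrightarrow> ?L $$ (i,j) \<le> 0"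
    using Suc by auto
  have f: "?f i < N (Suc m)" if "i < N m" for i
    using surj[of "Suc m"] Suc.prems that by auto
  have Pdef: "Pplus N \<phi> (Suc m) = mat (N m) (N (Suc m)) (\<lambda>(i,r). if ?f i = r then 1 else 0)"
    unfolding Pplus_def by simp
  have LS: "Llev (laplacian W) N \<phi> (Suc m) = (mat (N m) (N (Suc m)) (\<lambda>(i,r). if ?f i = r then 1 else 0))\<^sup>T * ?L
      * mat (N m) (N (Suc m)) (\<lambda>(i,r). if ?f i = r then 1 else 0)"
    by (simp add: Pdef)
  have E: "Llev (laplacian W) N \<phi> (Suc m) $$ (r,s) = (\<Sum>i<N m. \<Sum>j<N m. if ?f i = r \<and> ?f j = s then ?L $$ (i,j) else 0)"
    if "r < N (Suc m)" "s < N (Suc m)" for r s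
    unfolding LS by (rule coarse_entry[OF IH(1) f that])
  have car: "Llev (laplacian W) N \<phi> (Suc m) \<in> carrier_mat (N (Suc m)) (N (Suc m))"
    unfolding LS by (rule mult_carrier_mat[OF mult_carrier_mat[OF _ IH(1)]]) simp_all
  have sym: "symmetric_mat (Llev (laplacian W) N \<phi> (Suc m))"
  proof -
    have "Llev (laplacian W) N \<phi> (Suc m) $$ (s,r) = Llev (laplacian W) N \<phi> (Suc m) $$ (r,s)"
      if "r < N (Suc m)" "s < N (Suc m)" for r s
    proof -
      have "(\<Sum>i<N m. \<Sum>j<N m. if ?f i = s \<and> ?f j = r then ?L $$ (i,j) else 0)
          = (\<Sum>j<N m. \<Sum>i<N m. if ?f i = s \<and> ?f j = r then ?L $$ (i,j) else 0)" by (rule sum.swap)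
      also have "\<dots> = (\<Sum>j<N m. \<Sum>i<N m. if ?f j = r \<and> ?f i = s then ?L $$ (j,i) else 0)"
        by (intro sum.cong refl) (use symD[OF IH(2) IH(1)] in auto)
      finally show ?thesis using E that by simp
    qed
    thus ?thesis unfolding symmetric_mat_def using car by (intro eq_matI) auto
  qed
  have rs: "(\<Sum>s<N (Suc m). Llev (laplacian W) N \<phi> (Suc m) $$ (r,s)) = 0" if r: "r < N (Suc m)" for r
  proof -
    have "(\<Sum>s<N (Suc m). Llev (laplacian W) N \<phi> (Suc m) $$ (r,s))
        = (\<Sum>s<N (Suc m). \<Sum>i<N m. \<Sum>j<N m. if ?f i = r \<and> ?f j = s then ?L $$ (i,j) else 0)"
      using E r by simp
    also have "\<dots> = (\<Sum>i<N m. \<Sum>j<N m. \<Sum>s<N (Suc m). if ?f i = r \<and> ?f j = s then ?L $$ (i,j) else 0)"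
      by (subst sum.swap, rule sum.cong, rule refl, rule sum.swap)
    also have "\<dots> = (\<Sum>i<N m. \<Sum>j<N m. if ?f i = r then ?L $$ (i,j) else 0)"
    proof (intro sum.cong refl)
      fix i j assume "i \<in> {..<N m}" "j \<in> {..<N m}"
      hence fj: "?f j \<in> {..<N (Suc m)}" using f by auto
      have "(\<Sum>s<N (Suc m). if ?f i = r \<and> ?f j = s then ?L $$ (i,j) else 0)
          = (\<Sum>s<N (Suc m). if ?f j = s then (if ?f i = r then ?L $$ (i,j) else 0) else 0)"
        by (intro sum.cong refl) auto
      also have "\<dots> = (if ?f i = r then ?L $$ (i,j) else 0)"
        using fj by (simp add: sum.delta)
      finally show "(\<Sum>s<N (Suc m). if ?f i = r \<and> ?f j = s then ?L $$ (i,j) else 0) = (if ?f i = r then ?L $$ (i,j) else 0)" .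
    qed
    also have "\<dots> = (\<Sum>i<N m. if ?f i = r then (\<Sum>j<N m. ?L $$ (i,j)) else 0)"
      by (intro sum.cong refl) auto
    also have "\<dots> = 0" using IH(3) by (intro sum.neutral) auto
    finally show ?thesis .
  qed
  have od: "Llev (laplacian W) N \<phi> (Suc m) $$ (r,s) \<le> 0" if "r < N (Suc m)" "s < N (Suc m)" "r \<noteq> s" for r s
  proof -
    have "(\<Sum>i<N m. \<Sum>j<N m. if ?f i = r \<and> ?f j = s then ?L $$ (i,j) else 0) \<le> 0"
    proof (intro sum_nonpos)
      fix i j assume "i \<in> {..<N m}" "j \<in> {..<N m}"
      thus "(if ?f i = r \<and> ?f j = s then ?L $$ (i,j) else 0) \<le> 0"
        using IH(4)[of i j] that(3) by auto
    qed
    thus ?thesis using E that by simp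
  qed
  show ?case using car sym rs od by auto
qed


lemma gram: assumes S: "S \<in> carrier_mat p n" and z: "(z::real vec) \<in> carrier_vec n"
  shows "(S *\<^sub>v z) \<bullet> (S *\<^sub>v z) = z \<bullet> ((S\<^sup>T * S) *\<^sub>v z)"
proof -
  have St: "S\<^sup>T \<in> carrier_mat n p" using S by simp
  have Sz: "S *\<^sub>v z \<in> carrier_vec p" using S z by simp
  have "(S\<^sup>T * S) *\<^sub>v z = S\<^sup>T *\<^sub>v (S *\<^sub>v z)" by (rule assoc_mult_mat_vec[OF St S z])
  hence "z \<bullet> ((S\<^sup>T * S) *\<^sub>v z) = (S\<^sup>T *\<^sub>v (S *\<^sub>v z)) \<bullet> z"
    using comm_scalar_prod[OF z, of "S\<^sup>T *\<^sub>v (S *\<^sub>v z)"] St Sz by simp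
  also have "\<dots> = (S *\<^sub>v z) \<bullet> (S *\<^sub>v z)" by (rule transpose_vec_mult_scalar[OF S z Sz])
  finally show ?thesis by simp
qed

locale coarse =
  fixes W :: "real mat" and N :: "nat \<Rightarrow> nat" and \<phi> :: "nat \<Rightarrow> nat \<Rightarrow> nat" and m :: nat
  assumes graph: "weight_matrix (N 0) W"
    and surj: "\<And>j. 1 \<le> j \<Longrightarrow> j \<le> Suc m \<Longrightarrow> \<phi> j ` {..<N (j - 1)} = {..<N j}"
begin


lemma LL_all: "(Llev (laplacian W) N \<phi> m) \<in> carrier_mat (N m) (N m) \<and> symmetric_mat (Llev (laplacian W) N \<phi> m)
    \<and> (\<forall>i<(N m). (\<Sum>j<(N m). (Llev (laplacian W) N \<phi> m) $$ (i,j)) = 0)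
    \<and> (\<forall>i<(N m). \<forall>j<(N m). i \<noteq> j \<longrightarrow> (Llev (laplacian W) N \<phi> m) $$ (i,j) \<le> 0)"
proof -
  have X: "m < Suc m" by simp
  show ?thesis
    by (rule Llev_props[where W=W and N=N and \<phi>=\<phi> and l="Suc m" and m="m", OF graph _ X])
       (rule surj; assumption)
qed

lemma LL_props: "(Llev (laplacian W) N \<phi> m) \<in> carrier_mat (N m) (N m)" "symmetric_mat (Llev (laplacian W) N \<phi> m)"
  "\<And>i. i < (N m) \<Longrightarrow> (\<Sum>j<(N m). (Llev (laplacian W) N \<phi> m) $$ (i,j)) = 0"
  "\<And>i j. i < (N m) \<Longrightarrow> j < (N m) \<Longrightarrow> i \<noteq> j \<Longrightarrow> (Llev (laplacian W) N \<phi> m) $$ (i,j) \<le> 0"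
proof -
  note P = LL_all
  show "(Llev (laplacian W) N \<phi> m) \<in> carrier_mat (N m) (N m)" using P by (rule conjunct1)
  show "symmetric_mat (Llev (laplacian W) N \<phi> m)" using P[THEN conjunct2] by (rule conjunct1)
  have c: "\<forall>i<(N m). (\<Sum>j<(N m). (Llev (laplacian W) N \<phi> m) $$ (i,j)) = 0" using P[THEN conjunct2, THEN conjunct2] by (rule conjunct1)
  have d: "\<forall>i<(N m). \<forall>j<(N m). i \<noteq> j \<longrightarrow> (Llev (laplacian W) N \<phi> m) $$ (i,j) \<le> 0" using P[THEN conjunct2, THEN conjunct2] by (rule conjunct2)
  show "\<And>i. i < (N m) \<Longrightarrow> (\<Sum>j<(N m). (Llev (laplacian W) N \<phi> m) $$ (i,j)) = 0" using c by simp
  show "\<And>i j. i < (N m) \<Longrightarrow> j < (N m) \<Longrightarrow> i \<noteq> j \<Longrightarrow> (Llev (laplacian W) N \<phi> m) $$ (i,j) \<le> 0" using d by simp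
qed

lemma ff_range: assumes "i < (N m)" shows "\<phi> (Suc m) i < N (Suc m)"
proof -
  have e: "(\<phi> (Suc m)) ` {..<(N m)} = {..<N (Suc m)}" using surj[of "Suc m"] by simp
  have "\<phi> (Suc m) i \<in> (\<phi> (Suc m)) ` {..<(N m)}" using assms by simp
  hence "\<phi> (Suc m) i \<in> {..<N (Suc m)}" by (simp only: e)
  thus ?thesis by simp
qed

lemma ww_carrier: "(weights_of (Llev (laplacian W) N \<phi> m)) \<in> carrier_mat (N m) (N m)"
  using LL_props(1) unfolding weights_of_def by simp

lemma ww_entry: "i < (N m) \<Longrightarrow> j < (N m) \<Longrightarrow> (weights_of (Llev (laplacian W) N \<phi> m)) $$ (i,j) = (if i = j then 0 else - (Llev (laplacian W) N \<phi> m) $$ (i,j))"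
  using LL_props(1) unfolding weights_of_def by simp

lemma ww_nonneg: "i < (N m) \<Longrightarrow> j < (N m) \<Longrightarrow> 0 \<le> (weights_of (Llev (laplacian W) N \<phi> m)) $$ (i,j)"
  using ww_entry LL_props(4) by (cases "i = j") auto

lemma ww_sym: "i < (N m) \<Longrightarrow> j < (N m) \<Longrightarrow> (weights_of (Llev (laplacian W) N \<phi> m)) $$ (i,j) = (weights_of (Llev (laplacian W) N \<phi> m)) $$ (j,i)"
proof -
  assume a: "i < (N m)" "j < (N m)"
  have "(Llev (laplacian W) N \<phi> m) $$ (i,j) = (Llev (laplacian W) N \<phi> m) $$ (j,i)" by (rule symD[OF LL_props(2,1) a])
  thus ?thesis using a by (simp add: ww_entry)
qed

lemma LL_form: assumes z: "z \<in> carrier_vec (N m)"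
  shows "z \<bullet> ((Llev (laplacian W) N \<phi> m) *\<^sub>v z) = (1/2) * (\<Sum>i<(N m). \<Sum>j<(N m). (weights_of (Llev (laplacian W) N \<phi> m)) $$ (i,j) * (z $ i - z $ j)^2)"
proof -
  have "z \<bullet> ((Llev (laplacian W) N \<phi> m) *\<^sub>v z) = - (1/2) * (\<Sum>i<(N m). \<Sum>j<(N m). (Llev (laplacian W) N \<phi> m) $$ (i,j) * (z $ i - z $ j)^2)"
    by (rule zrs_form[OF LL_props(1,2) LL_props(3) z])
  also have "(\<Sum>i<(N m). \<Sum>j<(N m). (Llev (laplacian W) N \<phi> m) $$ (i,j) * (z $ i - z $ j)^2) = - (\<Sum>i<(N m). \<Sum>j<(N m). (weights_of (Llev (laplacian W) N \<phi> m)) $$ (i,j) * (z $ i - z $ j)^2)"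
    unfolding sum_negf[symmetric] by (intro sum.cong refl) (auto simp: ww_entry)
  finally show ?thesis by simp
qed


lemma CC_iff: "i < (N m) \<Longrightarrow> i \<in> (contraction_set N \<phi> (Suc m) r) \<longleftrightarrow> \<phi> (Suc m) i = r"
  unfolding contraction_set_def by simp

lemma WC_carrier: "(W_C (weights_of (Llev (laplacian W) N \<phi> m)) (contraction_set N \<phi> (Suc m) r)) \<in> carrier_mat (N m) (N m)"
  using ww_carrier unfolding W_C_def by simp

lemma WC_entry: "i < (N m) \<Longrightarrow> j < (N m) \<Longrightarrow> (W_C (weights_of (Llev (laplacian W) N \<phi> m)) (contraction_set N \<phi> (Suc m) r)) $$ (i,j) =
   (if \<phi> (Suc m) i = r \<and> \<phi> (Suc m) j = r then (weights_of (Llev (laplacian W) N \<phi> m)) $$ (i,j) else if \<phi> (Suc m) i = r \<or> \<phi> (Suc m) j = r then 2 * (weights_of (Llev (laplacian W) N \<phi> m)) $$ (i,j) else 0)"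
  using ww_carrier CC_iff unfolding W_C_def by simp

lemma WC_sym: "symmetric_mat ((W_C (weights_of (Llev (laplacian W) N \<phi> m)) (contraction_set N \<phi> (Suc m) r)))"
proof -
  have "(W_C (weights_of (Llev (laplacian W) N \<phi> m)) (contraction_set N \<phi> (Suc m) r)) $$ (j,i) = (W_C (weights_of (Llev (laplacian W) N \<phi> m)) (contraction_set N \<phi> (Suc m) r)) $$ (i,j)" if "i < (N m)" "j < (N m)" for i j
  proof -
    have e: "(weights_of (Llev (laplacian W) N \<phi> m)) $$ (j,i) = (weights_of (Llev (laplacian W) N \<phi> m)) $$ (i,j)" using ww_sym[OF that(2,1)] .
    show ?thesis using that by (simp add: WC_entry e conj_commute disj_commute)
  qed
  note h = this
  show ?thesis unfolding symmetric_mat_def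
  proof (rule eq_matI)
    fix i j assume "i < dim_row (W_C (weights_of (Llev (laplacian W) N \<phi> m)) (contraction_set N \<phi> (Suc m) r))" "j < dim_col (W_C (weights_of (Llev (laplacian W) N \<phi> m)) (contraction_set N \<phi> (Suc m) r))"
    hence ij: "i < N m" "j < N m" using WC_carrier[of r] by auto
    show "transpose_mat (W_C (weights_of (Llev (laplacian W) N \<phi> m)) (contraction_set N \<phi> (Suc m) r)) $$ (i,j) = (W_C (weights_of (Llev (laplacian W) N \<phi> m)) (contraction_set N \<phi> (Suc m) r)) $$ (i,j)" using h[OF ij] ij WC_carrier[of r] by simp
  qed (use WC_carrier[of r] in auto)
qed

lemma WC_nonneg: "i < (N m) \<Longrightarrow> j < (N m) \<Longrightarrow> 0 \<le> (W_C (weights_of (Llev (laplacian W) N \<phi> m)) (contraction_set N \<phi> (Suc m) r)) $$ (i,j)"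
  using WC_entry ww_nonneg by auto

lemma LC_eq: "L_C (weights_of (Llev (laplacian W) N \<phi> m)) ((contraction_set N \<phi> (Suc m) r)) = laplacian ((W_C (weights_of (Llev (laplacian W) N \<phi> m)) (contraction_set N \<phi> (Suc m) r)))" unfolding L_C_def ..

lemma LC_carrier: "L_C (weights_of (Llev (laplacian W) N \<phi> m)) ((contraction_set N \<phi> (Suc m) r)) \<in> carrier_mat (N m) (N m)"
  unfolding LC_eq using lap_carrier[of "(W_C (weights_of (Llev (laplacian W) N \<phi> m)) (contraction_set N \<phi> (Suc m) r))"] WC_carrier[of r] by (simp add: carrier_matD)

lemma LC_psd: "psd_mat (L_C (weights_of (Llev (laplacian W) N \<phi> m)) ((contraction_set N \<phi> (Suc m) r)))"
  unfolding LC_eq by (rule lap_psd[OF WC_carrier WC_sym WC_nonneg])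

lemma LC_form: assumes u: "u \<in> carrier_vec (N m)"
  shows "u \<bullet> (L_C (weights_of (Llev (laplacian W) N \<phi> m)) ((contraction_set N \<phi> (Suc m) r)) *\<^sub>v u) = (1/2) * (\<Sum>i<(N m). \<Sum>j<(N m). (if i = j then 0 else (W_C (weights_of (Llev (laplacian W) N \<phi> m)) (contraction_set N \<phi> (Suc m) r)) $$ (i,j)) * (u $ i - u $ j)^2)"
  unfolding LC_eq by (rule lap_form[OF WC_carrier WC_sym u])


end


context coarse
begin

lemma card_pos: "i < N m \<Longrightarrow> card (contraction_set N \<phi> (Suc m) (\<phi> (Suc m) i)) > 0"
  unfolding contraction_set_def by (rule card_gt_0_iff[THEN iffD2]) auto

lemma Pi_carrier: "Pi_perp N \<phi> (Suc m) \<in> carrier_mat (N m) (N m)"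
  unfolding Pi_perp_def Pplus_def Pmat_def by (intro minus_carrier_mat) auto

lemma Pi_entry: assumes ij: "i < N m" "j < N m"
  shows "Pi_perp N \<phi> (Suc m) $$ (i,j) = (if i = j then 1 else 0) -
     (if \<phi> (Suc m) j = \<phi> (Suc m) i then 1 / real (card (contraction_set N \<phi> (Suc m) (\<phi> (Suc m) i))) else 0)"
proof -
  let ?Pp = "Pplus N \<phi> (Suc m)" and ?Pm = "Pmat N \<phi> (Suc m)"
  have Pp: "?Pp \<in> carrier_mat (N m) (N (Suc m))" unfolding Pplus_def by simp
  have Pm: "?Pm \<in> carrier_mat (N (Suc m)) (N m)" unfolding Pmat_def by simp
  have fi: "\<phi> (Suc m) i \<in> {..<N (Suc m)}" using ff_range[OF ij(1)] by simp
  have "(?Pp * ?Pm) $$ (i,j) = (\<Sum>r<N (Suc m). ?Pp $$ (i,r) * ?Pm $$ (r,j))"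
    by (rule mm_entry[OF Pp Pm ij])
  also have "\<dots> = (\<Sum>r<N (Suc m). if \<phi> (Suc m) i = r then
      (if \<phi> (Suc m) j = r then 1 / real (card (contraction_set N \<phi> (Suc m) r)) else 0) else 0)"
    using ij unfolding Pplus_def Pmat_def by (intro sum.cong refl) auto
  also have "\<dots> = (if \<phi> (Suc m) j = \<phi> (Suc m) i then 1 / real (card (contraction_set N \<phi> (Suc m) (\<phi> (Suc m) i))) else 0)"
    using fi by (simp add: sum.delta)
  finally have e: "(?Pp * ?Pm) $$ (i,j) = \<dots>" .
  have "Pi_perp N \<phi> (Suc m) $$ (i,j) = 1\<^sub>m (N m) $$ (i,j) - (?Pp * ?Pm) $$ (i,j)"
    unfolding Pi_perp_def using ij Pp Pm by simp
  thus ?thesis using e ij by simp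
qed

lemma PiC_carrier: "Pi_C_perp (N m) C \<in> carrier_mat (N m) (N m)"
  unfolding Pi_C_perp_def by simp

lemma PiC_entry: assumes ij: "i < N m" "j < N m"
  shows "Pi_C_perp (N m) (contraction_set N \<phi> (Suc m) r) $$ (i,j) =
    (if \<phi> (Suc m) i = r then Pi_perp N \<phi> (Suc m) $$ (i,j) else 0)"
  using ij unfolding Pi_entry[OF ij] Pi_C_perp_def by (auto simp: CC_iff)

lemma u_entry: assumes y: "y \<in> carrier_vec (N m)" and i: "i < N m"
  shows "(Pi_C_perp (N m) (contraction_set N \<phi> (Suc m) r) *\<^sub>v y) $ i =
     (if \<phi> (Suc m) i = r then (Pi_perp N \<phi> (Suc m) *\<^sub>v y) $ i else 0)"
proof -
  have "(Pi_C_perp (N m) (contraction_set N \<phi> (Suc m) r) *\<^sub>v y) $ i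
     = (\<Sum>j<N m. Pi_C_perp (N m) (contraction_set N \<phi> (Suc m) r) $$ (i,j) * y $ j)"
    by (rule mv_index[OF PiC_carrier y i])
  also have "\<dots> = (\<Sum>j<N m. (if \<phi> (Suc m) i = r then Pi_perp N \<phi> (Suc m) $$ (i,j) * y $ j else 0))"
    using i by (intro sum.cong refl) (simp add: PiC_entry)
  also have "\<dots> = (if \<phi> (Suc m) i = r then (\<Sum>j<N m. Pi_perp N \<phi> (Suc m) $$ (i,j) * y $ j) else 0)"
    by simp
  also have "\<dots> = (if \<phi> (Suc m) i = r then (Pi_perp N \<phi> (Suc m) *\<^sub>v y) $ i else 0)"
    using mv_index[OF Pi_carrier y i] by simp
  finally show ?thesis .
qed

lemma pair_ineq: fixes w zi zj :: real assumes "0 \<le> w"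
  shows "w * (zi - zj)^2 \<le> 2 * w * zi^2 + 2 * w * zj^2"
proof -
  have e: "2 * zi^2 + 2 * zj^2 - (zi - zj)^2 = (zi + zj)^2" by (simp add: power2_eq_square algebra_simps)
  have "0 \<le> (zi + zj)^2" by simp
  hence "(zi - zj)^2 \<le> 2 * zi^2 + 2 * zj^2" using e by linarith
  hence "w * (zi - zj)^2 \<le> w * (2 * zi^2 + 2 * zj^2)" by (rule mult_left_mono[OF _ assms])
  thus ?thesis by (simp add: algebra_simps)
qed


lemma pointwise:
  fixes z :: "nat \<Rightarrow> real"
  assumes ij: "i < N m" "j < N m"
  shows "weights_of (Llev (laplacian W) N \<phi> m) $$ (i,j) * (z i - z j)^2 \<le>
    (\<Sum>r<N (Suc m). (if i = j then 0 else W_C (weights_of (Llev (laplacian W) N \<phi> m)) (contraction_set N \<phi> (Suc m) r) $$ (i,j))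
        * ((if \<phi> (Suc m) i = r then z i else 0) - (if \<phi> (Suc m) j = r then z j else 0))^2)"
    (is "?w * _ \<le> (\<Sum>r<N (Suc m). ?G r)")
proof (cases "i = j")
  case True then show ?thesis by simp
next
  case False
  have w: "0 \<le> ?w" by (rule ww_nonneg[OF ij])
  have G0: "0 \<le> ?G r" for r
  proof (rule mult_nonneg_nonneg)
    show "0 \<le> (if i = j then 0 else W_C (weights_of (Llev (laplacian W) N \<phi> m)) (contraction_set N \<phi> (Suc m) r) $$ (i,j))"
      using WC_nonneg[OF ij, of r] by (simp only: if_False False)
  qed (rule zero_le_power2)
  obtain a where fa: "\<phi> (Suc m) i = a" by blast
  obtain b where fb: "\<phi> (Suc m) j = b" by blast
  have a: "a \<in> {..<N (Suc m)}" using ff_range[OF ij(1)] fa by simp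
  have b: "b \<in> {..<N (Suc m)}" using ff_range[OF ij(2)] fb by simp
  let ?WC = "\<lambda>r. W_C (weights_of (Llev (laplacian W) N \<phi> m)) (contraction_set N \<phi> (Suc m) r)"
  have Gr: "?G r = ?WC r $$ (i,j) * ((if a = r then z i else 0) - (if b = r then z j else 0))^2" for r
    using False fa fb by simp
  show ?thesis
  proof (cases "a = b")
    case True
    have e: "?WC a $$ (i,j) = ?w" using WC_entry[OF ij, of a] fa fb True by simp
    have "?G a = ?WC a $$ (i,j) * ((if a = a then z i else 0) - (if b = a then z j else 0))^2" by (rule Gr)
    also have "\<dots> = ?w * (z i - z j)^2" unfolding e using True by simp
    finally have g: "?w * (z i - z j)^2 = ?G a" by simp
    have "?G a \<le> (\<Sum>r<N (Suc m). ?G r)"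
      by (rule member_le_sum[OF a]) (use G0 in auto)
    thus ?thesis unfolding g .
  next
    case ab: False
    have ne: "b \<noteq> a" using ab by (rule not_sym)
    have "?WC a $$ (i,j) = (if a = a \<and> b = a then ?w else if a = a \<or> b = a then 2 * ?w else 0)"
      using WC_entry[OF ij, of a] unfolding fa fb .
    also have "\<dots> = 2 * ?w" using ne by simp
    finally have ea: "?WC a $$ (i,j) = 2 * ?w" .
    have "?WC b $$ (i,j) = (if a = b \<and> b = b then ?w else if a = b \<or> b = b then 2 * ?w else 0)"
      using WC_entry[OF ij, of b] unfolding fa fb .
    also have "\<dots> = 2 * ?w" using ab by simp
    finally have eb: "?WC b $$ (i,j) = 2 * ?w" .
    have "?G a = ?WC a $$ (i,j) * ((if a = a then z i else 0) - (if b = a then z j else 0))^2" by (rule Gr)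
    also have "\<dots> = 2 * ?w * (z i)^2" unfolding ea using ne by simp
    finally have Ga: "?G a = 2 * ?w * (z i)^2" .
    have "?G b = ?WC b $$ (i,j) * ((if a = b then z i else 0) - (if b = b then z j else 0))^2" by (rule Gr)
    also have "\<dots> = 2 * ?w * (z j)^2" unfolding eb using ab by simp
    finally have Gb: "?G b = 2 * ?w * (z j)^2" .
    have "?w * (z i - z j)^2 \<le> ?G a + ?G b" unfolding Ga Gb by (rule pair_ineq[OF w])
    also have "\<dots> = (\<Sum>r\<in>{a,b}. ?G r)"
    proof -
      have "(\<Sum>r\<in>insert a {b}. ?G r) = ?G a + (\<Sum>r\<in>{b}. ?G r)"
        by (rule sum.insert) (use ab in auto)
      thus ?thesis by simp
    qed
    also have "\<dots> \<le> (\<Sum>r<N (Suc m). ?G r)"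
      by (rule sum_mono2) (use a b G0 in auto)
    finally show ?thesis .
  qed
qed

lemma key: assumes y: "y \<in> carrier_vec (N m)"
  shows "(Pi_perp N \<phi> (Suc m) *\<^sub>v y) \<bullet> (Llev (laplacian W) N \<phi> m *\<^sub>v (Pi_perp N \<phi> (Suc m) *\<^sub>v y))
   \<le> (\<Sum>r<N (Suc m). (Pi_C_perp (N m) (contraction_set N \<phi> (Suc m) r) *\<^sub>v y) \<bullet>
          (L_C (weights_of (Llev (laplacian W) N \<phi> m)) (contraction_set N \<phi> (Suc m) r) *\<^sub>v
             (Pi_C_perp (N m) (contraction_set N \<phi> (Suc m) r) *\<^sub>v y)))"
proof -
  define z where "z = Pi_perp N \<phi> (Suc m) *\<^sub>v y"
  define u where "u r = Pi_C_perp (N m) (contraction_set N \<phi> (Suc m) r) *\<^sub>v y" for r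
  have z: "z \<in> carrier_vec (N m)" unfolding z_def by (rule mult_mat_vec_carrier[OF Pi_carrier y])
  have u: "u r \<in> carrier_vec (N m)" for r unfolding u_def by (rule mult_mat_vec_carrier[OF PiC_carrier y])
  have ue: "u r $ i = (if \<phi> (Suc m) i = r then z $ i else 0)" if "i < N m" for r i
    unfolding u_def z_def by (rule u_entry[OF y that])
  let ?WC = "\<lambda>r. W_C (weights_of (Llev (laplacian W) N \<phi> m)) (contraction_set N \<phi> (Suc m) r)"
  have "z \<bullet> (Llev (laplacian W) N \<phi> m *\<^sub>v z) =
      (1/2) * (\<Sum>i<N m. \<Sum>j<N m. weights_of (Llev (laplacian W) N \<phi> m) $$ (i,j) * (z $ i - z $ j)^2)"
    by (rule LL_form[OF z])
  also have "\<dots> \<le> (1/2) * (\<Sum>i<N m. \<Sum>j<N m. \<Sum>r<N (Suc m). (if i = j then 0 else ?WC r $$ (i,j))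
        * ((if \<phi> (Suc m) i = r then z $ i else 0) - (if \<phi> (Suc m) j = r then z $ j else 0))^2)"
  proof (rule mult_left_mono)
    show "(\<Sum>i<N m. \<Sum>j<N m. weights_of (Llev (laplacian W) N \<phi> m) $$ (i,j) * (z $ i - z $ j)^2) \<le>
       (\<Sum>i<N m. \<Sum>j<N m. \<Sum>r<N (Suc m). (if i = j then 0 else ?WC r $$ (i,j))
        * ((if \<phi> (Suc m) i = r then z $ i else 0) - (if \<phi> (Suc m) j = r then z $ j else 0))^2)"
    proof (rule sum_mono, rule sum_mono)
      fix i j assume "i \<in> {..<N m}" "j \<in> {..<N m}"
      thus "weights_of (Llev (laplacian W) N \<phi> m) $$ (i,j) * (z $ i - z $ j)^2 \<le>
         (\<Sum>r<N (Suc m). (if i = j then 0 else ?WC r $$ (i,j))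
        * ((if \<phi> (Suc m) i = r then z $ i else 0) - (if \<phi> (Suc m) j = r then z $ j else 0))^2)"
        using pointwise[of i j "\<lambda>k. z $ k"] by simp
    qed
  qed simp
  also have "\<dots> = (1/2) * (\<Sum>i<N m. \<Sum>j<N m. \<Sum>r<N (Suc m). (if i = j then 0 else ?WC r $$ (i,j))
        * (u r $ i - u r $ j)^2)"
    by (intro arg_cong[where f="\<lambda>x. (1/2) * x"] sum.cong refl) (simp add: ue)
  also have "\<dots> = (\<Sum>r<N (Suc m). (1/2) * (\<Sum>i<N m. \<Sum>j<N m. (if i = j then 0 else ?WC r $$ (i,j))
        * (u r $ i - u r $ j)^2))"
  proof -
    have "(\<Sum>i<N m. \<Sum>j<N m. \<Sum>r<N (Suc m). (if i = j then 0 else ?WC r $$ (i,j)) * (u r $ i - u r $ j)^2)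
        = (\<Sum>i<N m. \<Sum>r<N (Suc m). \<Sum>j<N m. (if i = j then 0 else ?WC r $$ (i,j)) * (u r $ i - u r $ j)^2)"
      by (intro sum.cong refl sum.swap)
    also have "\<dots> = (\<Sum>r<N (Suc m). \<Sum>i<N m. \<Sum>j<N m. (if i = j then 0 else ?WC r $$ (i,j)) * (u r $ i - u r $ j)^2)"
      by (rule sum.swap)
    finally show ?thesis by (simp add: sum_distrib_left)
  qed
  also have "\<dots> = (\<Sum>r<N (Suc m). u r \<bullet> (L_C (weights_of (Llev (laplacian W) N \<phi> m)) (contraction_set N \<phi> (Suc m) r) *\<^sub>v u r))"
    by (intro sum.cong refl) (simp add: LC_form[OF u])
  finally show ?thesis unfolding z_def u_def .
qed


lemma final_ineq:
  assumes S: "S \<in> carrier_mat (dim_row S) (N m)" "S\<^sup>T * S = Llev (laplacian W) N \<phi> m"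
    and A: "A \<in> carrier_mat (N m) k"
  shows "(spec_norm (S * Pi_perp N \<phi> (Suc m) * A))\<^sup>2
    \<le> (\<Sum>r<N (Suc m). (L_norm (L_C (weights_of (Llev (laplacian W) N \<phi> m)) (contraction_set N \<phi> (Suc m) r))
                  (Pi_C_perp (N m) (contraction_set N \<phi> (Suc m) r) * A))\<^sup>2)"
proof -
  let ?Pi = "Pi_perp N \<phi> (Suc m)"
  let ?LC = "\<lambda>r. L_C (weights_of (Llev (laplacian W) N \<phi> m)) (contraction_set N \<phi> (Suc m) r)"
  let ?PC = "\<lambda>r. Pi_C_perp (N m) (contraction_set N \<phi> (Suc m) r)"
  let ?R = "\<lambda>r. psd_sqrt (?LC r)"
  let ?Mr = "\<lambda>r. ?R r * (?PC r * A)"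
  let ?M = "S * ?Pi * A"
  define K where "K = (\<Sum>r<N (Suc m). (spec_norm (?Mr r))\<^sup>2)"
  have R: "?R r \<in> carrier_mat (N m) (N m)" "psd_mat (?R r)" "?R r * ?R r = ?LC r" for r
    using psd_sqrt[OF LC_carrier LC_psd] by auto
  have Rt: "(?R r)\<^sup>T = ?R r" for r using R(2) unfolding psd_mat_def symmetric_mat_def by auto
  have Pi: "?Pi \<in> carrier_mat (N m) (N m)" by (rule Pi_carrier)
  have SPi: "S * ?Pi \<in> carrier_mat (dim_row S) (N m)" by (rule mult_carrier_mat[OF S(1) Pi])
  have M: "?M \<in> carrier_mat (dim_row S) k" by (rule mult_carrier_mat[OF SPi A])
  have PCA: "?PC r * A \<in> carrier_mat (N m) k" for r by (rule mult_carrier_mat[OF PiC_carrier A])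
  have Mr: "?Mr r \<in> carrier_mat (N m) k" for r by (rule mult_carrier_mat[OF R(1) PCA])
  have bound: "vnorm (?M *\<^sub>v x) \<le> sqrt K" if x: "x \<in> carrier_vec (dim_col ?M)" "vnorm x \<le> 1" for x
  proof -
    have xk: "x \<in> carrier_vec k" using x(1) A by simp
    define y where "y = A *\<^sub>v x"
    have y: "y \<in> carrier_vec (N m)" unfolding y_def using A xk by simp
    have Piy: "?Pi *\<^sub>v y \<in> carrier_vec (N m)" using Pi y by simp
    have Mx: "?M *\<^sub>v x = S *\<^sub>v (?Pi *\<^sub>v y)"
      unfolding y_def using assoc_mult_mat_vec[OF SPi A xk] assoc_mult_mat_vec[OF S(1) Pi, of "A *\<^sub>v x"] A xk
      by simp
    have "(vnorm (?M *\<^sub>v x))\<^sup>2 = (?Pi *\<^sub>v y) \<bullet> (Llev (laplacian W) N \<phi> m *\<^sub>v (?Pi *\<^sub>v y))"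
      unfolding vnorm_sq Mx gram[OF S(1) Piy] S(2) ..
    also have "\<dots> \<le> (\<Sum>r<N (Suc m). (?PC r *\<^sub>v y) \<bullet> (?LC r *\<^sub>v (?PC r *\<^sub>v y)))"
      by (rule key[OF y])
    also have "\<dots> = (\<Sum>r<N (Suc m). (vnorm (?Mr r *\<^sub>v x))\<^sup>2)"
    proof (intro sum.cong refl)
      fix r
      have u: "?PC r *\<^sub>v y \<in> carrier_vec (N m)" by (rule mult_mat_vec_carrier[OF PiC_carrier y])
      have "?Mr r *\<^sub>v x = ?R r *\<^sub>v (?PC r *\<^sub>v y)"
        unfolding y_def using assoc_mult_mat_vec[OF R(1) PCA xk] assoc_mult_mat_vec[OF PiC_carrier A xk] by simp
      hence "(vnorm (?Mr r *\<^sub>v x))\<^sup>2 = (?PC r *\<^sub>v y) \<bullet> (((?R r)\<^sup>T * ?R r) *\<^sub>v (?PC r *\<^sub>v y))"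
        unfolding vnorm_sq gram[OF R(1) u, symmetric] by simp
      also have "\<dots> = (?PC r *\<^sub>v y) \<bullet> (?LC r *\<^sub>v (?PC r *\<^sub>v y))" unfolding Rt R(3) ..
      finally show "(?PC r *\<^sub>v y) \<bullet> (?LC r *\<^sub>v (?PC r *\<^sub>v y)) = (vnorm (?Mr r *\<^sub>v x))\<^sup>2" by simp
    qed
    also have "\<dots> \<le> K" unfolding K_def
    proof (rule sum_mono)
      fix r
      have "vnorm (?Mr r *\<^sub>v x) \<le> spec_norm (?Mr r) * vnorm x" by (rule spec_scale[OF Mr xk])
      also have "\<dots> \<le> spec_norm (?Mr r) * 1" using x(2) spec_nonneg by (rule mult_left_mono)
      finally have "vnorm (?Mr r *\<^sub>v x) \<le> spec_norm (?Mr r)" by simp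
      thus "(vnorm (?Mr r *\<^sub>v x))\<^sup>2 \<le> (spec_norm (?Mr r))\<^sup>2"
        by (rule power_mono) (rule vnorm_nonneg)
    qed
    finally have "(vnorm (?M *\<^sub>v x))\<^sup>2 \<le> K" .
    thus ?thesis using vnorm_nonneg by (simp add: real_le_rsqrt)
  qed
  have "spec_norm ?M \<le> sqrt K" by (rule spec_least) (rule bound)
  hence "(spec_norm ?M)\<^sup>2 \<le> (sqrt K)\<^sup>2" by (rule power_mono) (rule spec_nonneg)
  also have "(sqrt K)\<^sup>2 = K" unfolding K_def by (simp add: sum_nonneg)
  finally show ?thesis unfolding K_def L_norm_def .
qed

end


lemma Blev_dim: "dim_row (Blev L V N \<phi> m) = (if m = 0 then dim_row V else N m)"
  by (cases m) (simp_all add: Pmat_def)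

lemma Alev_dim: "dim_row (Alev L V N \<phi> m) = (if m = 0 then dim_row V else N m)"
  unfolding Alev_def using Blev_dim[of L V N \<phi> m] by (cases "m = 0") simp_all

theorem proposition5:
  fixes W :: "real mat" and N :: "nat \<Rightarrow> nat" and \<phi> :: "nat \<Rightarrow> nat \<Rightarrow> nat"
    and V :: "real mat" and k :: nat and S :: "real mat" and l :: nat
  assumes graph: "weight_matrix (N 0) W"
    and connected: "induces_connected W {..<N 0}"
    and V_basis: "V \<in> carrier_mat (N 0) k" "V\<^sup>T * V = 1\<^sub>m k"
    and surj: "\<And>j. 1 \<le> j \<Longrightarrow> j \<le> l \<Longrightarrow> \<phi> j ` {..<N (j - 1)} = {..<N j}"
    and conn_sets: "\<And>j r. 1 \<le> j \<Longrightarrow> j \<le> l \<Longrightarrow> r < N j \<Longrightarrow>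
        induces_connected (weights_of (Llev (laplacian W) N \<phi> (j - 1))) (contraction_set N \<phi> j r)"
    and level: "1 \<le> l"
    and S_fac: "S \<in> carrier_mat (dim_row S) (N (l - 1))"
        "S\<^sup>T * S = Llev (laplacian W) N \<phi> (l - 1)"
  shows "(spec_norm (S * Pi_perp N \<phi> l * Alev (laplacian W) V N \<phi> (l - 1)))\<^sup>2
    \<le> (\<Sum>r<N l. (L_norm (L_C (weights_of (Llev (laplacian W) N \<phi> (l - 1))) (contraction_set N \<phi> l r))
                  (Pi_C_perp (N (l - 1)) (contraction_set N \<phi> l r) * Alev (laplacian W) V N \<phi> (l - 1)))\<^sup>2)"
proof -
  obtain m where l: "l = Suc m" using level by (cases l) auto
  have lm: "l - 1 = m" unfolding l by simp
  have c: "coarse W N \<phi> m"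
  proof
    show "weight_matrix (N 0) W" by (rule graph)
    fix j assume "1 \<le> j" "j \<le> Suc m"
    thus "\<phi> j ` {..<N (j - 1)} = {..<N j}" using surj l by simp
  qed
  let ?A = "Alev (laplacian W) V N \<phi> m"
  have dV: "dim_row V = N 0" using V_basis(1) by (rule carrier_matD)
  have dA: "dim_row ?A = N m"
  proof (cases "m = 0")
    case True
    then show ?thesis unfolding Alev_dim[of "laplacian W" V N \<phi> m] dV by simp
  next
    case False
    then show ?thesis unfolding Alev_dim[of "laplacian W" V N \<phi> m] by simp
  qed
  have A: "?A \<in> carrier_mat (N m) (dim_col ?A)" by (rule carrier_matI[OF dA refl])
  have S1: "S \<in> carrier_mat (dim_row S) (N m)" using S_fac(1) unfolding lm .
  have S2: "S\<^sup>T * S = Llev (laplacian W) N \<phi> m" using S_fac(2) unfolding lm .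
  show ?thesis unfolding lm unfolding l
    by (rule coarse.final_ineq[OF c S1 S2 A])
qed


end
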